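(* Let $(\mathcal A,\gamma,\phi)$ be a $\mathbb Z_2$-graded noncommutative probability space with the graded-tensor-product exchangeability system, let $X_1,\dots,X_n\in\mathcal A$ be homogeneous of degree $1$ and let $\pi\in\Pi_n$. Then $$\phi_\pi(X_1,\dots,X_n)=(-1)^{c_0(\pi)}\prod_{B\in\pi}\phi\Big(\prod_{i\in B}X_i\Big),\qquad K_\pi(X_1,\dots,X_n)=(-1)^{c_0(\pi)}\prod_{B\in\pi}K_{|B|}(X_i:i\in B),$$ with products and sequences within each block taken in increasing order of indices.
   Context: A $\mathbb Z_2$-graded noncommutative probability space $(\mathcal A,\gamma,\phi)$ consists of a complex unital algebra $\mathcal A=\mathcal A_+\oplus\mathcal A_-$ graded by an algebra automorphism $\gamma$ of order 2 and a unital linear functional $\phi$ with $\phi\circ\gamma=\phi$; homogeneous $X$ have degree $\partial X=0$ on $\mathcal A_+$, $1$ on $\mathcal A_-$. The graded tensor product of graded algebras is the tensor product with multiplication $(X_1\otimes X_2)(X_1'\otimes X_2')=(-1)^{\partial X_2\,\partial X_1'}X_1X_1'\otimes X_2X_2'$ on homogeneous elements and functional $\phi_1\otimes\phi_2$. The exchangeability system: $\mathcal U$ is the infinite graded tensor product of copies of $\mathcal A$ with product functional $\tilde\phi$, $X^{(k)}$ the copy of $X$ in the $k$-th factor. For a partition $\sigma$ of $[n]$, $\phi_\sigma(X_1,\dots,X_n)=\tilde\phi(X_1^{(i_1)}\cdots X_n^{(i_n)})$ for any indices with $i_j=i_l\iff j,l$ in the same block of $\sigma$; $K_\pi=\sum_{\sigma\le\pi}\phi_\sigma\mu(\sigma,\pi)$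 with $\mu$ the Möbius function of the refinement lattice $\Pi_n$, and $K_m=K_{\hat1_m}$ for the one-block partition. For $\pi=\{B_1,\dots,B_p\}$ with $\min B_1<\dots<\min B_p$ and blocks $A,B$ with $\min A<\min B$, $c_0(A,B)=\#\{(a,b):a\in A,b\in B,\min B<a<b\}$, and $c_0(\pi)=\sum_{i<j}c_0(B_i,B_j)$. *)

theory Defs
  imports Complex_Main "HOL-Library.Disjoint_Sets"
begin

text \<open>A complex unital algebra is modelled as a type of class ring_1 (unital, not necessarily
commutative ring) together with a complex scalar action sm satisfying the algebra axioms.  A_+ = {X. gam X = X}, A_- = {X. gam X = - X}.\<close>

definition complex_algebra :: "(complex \<Rightarrow> 'a::ring_1 \<Rightarrow> 'a) \<Rightarrow> bool" where
  "complex_algebra sm \<longleftrightarrow>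
     (\<forall>a x y. sm a (x + y) = sm a x + sm a y) \<and>
     (\<forall>a b x. sm (a + b) x = sm a x + sm b x) \<and>
     (\<forall>a b x. sm (a * b) x = sm a (sm b x)) \<and>
     (\<forall>x. sm 1 x = x) \<and>
     (\<forall>a x y. sm a (x * y) = sm a x * y) \<and>
     (\<forall>a x y. sm a (x * y) = x * sm a y)"

definition graded_ncps ::
  "(complex \<Rightarrow> 'a::ring_1 \<Rightarrow> 'a) \<Rightarrow> ('a \<Rightarrow> 'a) \<Rightarrow> ('a \<Rightarrow> complex) \<Rightarrow> bool" where
  "graded_ncps sm gam phi \<longleftrightarrow>
     complex_algebra sm \<and>
     \<comment> \<open>gam is a unital algebra automorphism of order 2\<close>
     (\<forall>x y. gam (x + y) = gam x + gam y) \<and>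
     (\<forall>a x. gam (sm a x) = sm a (gam x)) \<and>
     (\<forall>x y. gam (x * y) = gam x * gam y) \<and>
     gam 1 = 1 \<and>
     (\<forall>x. gam (gam x) = x) \<and> gam \<noteq> id \<and>
     \<comment> \<open>phi is a unital linear functional, invariant under gam\<close>
     (\<forall>x y. phi (x + y) = phi x + phi y) \<and>
     (\<forall>a x. phi (sm a x) = a * phi x) \<and>
     phi 1 = 1 \<and>
     (\<forall>x. phi (gam x) = phi x)"

definition gdeg :: "('a \<Rightarrow> 'a) \<Rightarrow> 'a \<Rightarrow> nat" where
  "gdeg gam x = (if gam x = x then 0 else 1)"

text \<open>An elementary tensor c * (a_1 (x) a_2 (x) ...) of homogeneous elements, with a_k = 1 for all
but finitely many k, is represented by the pair (c, a).  Multiplication follows the graded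
tensor product rule: moving the factor b_l past a_k (k > l) produces the sign
(-1)^(deg a_k * deg b_l).\<close>

type_synonym 'a etensor = "complex \<times> (nat \<Rightarrow> 'a)"

definition gt_one :: "'a::ring_1 etensor" where
  "gt_one = (1, \<lambda>_. 1)"

definition gt_copy :: "'a::ring_1 \<Rightarrow> nat \<Rightarrow> 'a etensor" where
  "gt_copy x k = (1, (\<lambda>_. 1)(k := x))"

definition gt_mult :: "('a::ring_1 \<Rightarrow> 'a) \<Rightarrow> 'a etensor \<Rightarrow> 'a etensor \<Rightarrow> 'a etensor" where
  "gt_mult gam t s =
     (fst t * fst s *
        (-1) ^ card {(k, l). l < k \<and> gdeg gam (snd t k) = 1 \<and> gdeg gam (snd s l) = 1},
      \<lambda>k. snd t k * snd s k)"

definition gt_state :: "('a::ring_1 \<Rightarrow> complex) \<Rightarrow> 'a etensor \<Rightarrow> complex" where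
  "gt_state phi t = fst t * (\<Prod>k\<in>{k. snd t k \<noteq> 1}. phi (snd t k))"

definition gt_prod :: "('a::ring_1 \<Rightarrow> 'a) \<Rightarrow> 'a etensor list \<Rightarrow> 'a etensor" where
  "gt_prod gam ts = foldl (gt_mult gam) gt_one ts"

definition set_partitions :: "nat \<Rightarrow> nat set set set" where
  "set_partitions n = {P. partition_on {1..n} P}"

definition refines :: "'b set set \<Rightarrow> 'b set set \<Rightarrow> bool" where
  "refines s p \<longleftrightarrow> (\<forall>B\<in>s. \<exists>C\<in>p. B \<subseteq> C)"

definition moebius :: "'b set \<Rightarrow> ('b \<Rightarrow> 'b \<Rightarrow> bool) \<Rightarrow> 'b \<Rightarrow> 'b \<Rightarrow> int" where
  "moebius S le = (THE m.
      (\<forall>x y. \<not> (x \<in> S \<and> y \<in> S \<and> le x y) \<longrightarrow> m x y = 0) \<and>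
      (\<forall>x\<in>S. \<forall>y\<in>S. le x y \<longrightarrow>
          (\<Sum>z\<in>{z\<in>S. le x z \<and> le z y}. m x z) = (if x = y then 1 else 0)))"

definition block_of :: "'b set set \<Rightarrow> 'b \<Rightarrow> 'b set" where
  "block_of s j = (THE B. B \<in> s \<and> j \<in> B)"

text \<open>phi_sigma(X_1,...,X_n) = phi-tilde(X_1^(i_1) ... X_n^(i_n)), with the admissible choice of
indices i_j = min of the block of sigma containing j (i_j = i_l iff j, l in the same block).\<close>
definition phi_part ::
  "('a::ring_1 \<Rightarrow> 'a) \<Rightarrow> ('a \<Rightarrow> complex) \<Rightarrow> nat \<Rightarrow> nat set set \<Rightarrow> (nat \<Rightarrow> 'a) \<Rightarrow> complex" where
  "phi_part gam phi n s X =
     gt_state phi (gt_prod gam (map (\<lambda>j. gt_copy (X j) (Min (block_of s j))) [1..<n+1]))"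

definition K_part ::
  "('a::ring_1 \<Rightarrow> 'a) \<Rightarrow> ('a \<Rightarrow> complex) \<Rightarrow> nat \<Rightarrow> nat set set \<Rightarrow> (nat \<Rightarrow> 'a) \<Rightarrow> complex" where
  "K_part gam phi n p X =
     (\<Sum>s\<in>{s\<in>set_partitions n. refines s p}.
        phi_part gam phi n s X * of_int (moebius (set_partitions n) refines s p))"

text \<open>K_m = K of the one-block partition of [m] (for m = 0 the only partition is the empty one).\<close>
definition K_num :: "('a::ring_1 \<Rightarrow> 'a) \<Rightarrow> ('a \<Rightarrow> complex) \<Rightarrow> nat \<Rightarrow> (nat \<Rightarrow> 'a) \<Rightarrow> complex" where
  "K_num gam phi m X = K_part gam phi m {{1..m}} X"

definition c0_pair :: "nat set \<Rightarrow> nat set \<Rightarrow> nat" where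
  "c0_pair A B = card {(a, b). a \<in> A \<and> b \<in> B \<and> Min B < a \<and> a < b}"

definition c0 :: "nat set set \<Rightarrow> nat" where
  "c0 p = (\<Sum>(A, B)\<in>{(A, B). A \<in> p \<and> B \<in> p \<and> Min A < Min B}. c0_pair A B)"

end

theory Submission
  imports Defs "HOL-Library.FuncSet"
begin

definition porder :: "'b set \<Rightarrow> ('b \<Rightarrow> 'b \<Rightarrow> bool) \<Rightarrow> bool" where
  "porder S le \<longleftrightarrow> (\<forall>x\<in>S. le x x) \<and> (\<forall>x\<in>S. \<forall>y\<in>S. le x y \<and> le y x \<longrightarrow> x = y)
     \<and> (\<forall>x\<in>S. \<forall>y\<in>S. \<forall>z\<in>S. le x y \<longrightarrow> le y z \<longrightarrow> le x z)"

lemma po_refl: "porder S le \<Longrightarrow> x \<in> S \<Longrightarrow> le x x" unfolding porder_def by blast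
lemma po_antisym: "porder S le \<Longrightarrow> x \<in> S \<Longrightarrow> y \<in> S \<Longrightarrow> le x y \<Longrightarrow> le y x \<Longrightarrow> x = y"
  unfolding porder_def by blast
lemma po_trans: "porder S le \<Longrightarrow> x \<in> S \<Longrightarrow> y \<in> S \<Longrightarrow> z \<in> S \<Longrightarrow> le x y \<Longrightarrow> le y z \<Longrightarrow> le x z"
  unfolding porder_def by blast

definition mob_prop :: "'b set \<Rightarrow> ('b \<Rightarrow> 'b \<Rightarrow> bool) \<Rightarrow> ('b \<Rightarrow> 'b \<Rightarrow> int) \<Rightarrow> bool" where
  "mob_prop S le m \<longleftrightarrow>
      (\<forall>x y. \<not> (x \<in> S \<and> y \<in> S \<and> le x y) \<longrightarrow> m x y = 0) \<and>
      (\<forall>x\<in>S. \<forall>y\<in>S. le x y \<longrightarrow>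
          (\<Sum>z\<in>{z\<in>S. le x z \<and> le z y}. m x z) = (if x = y then 1 else 0))"

lemma interval_psub:
  assumes po: "porder S le" and x: "x \<in> S" and y: "y \<in> S" and xy: "le x y"
    and z: "z \<in> S" "le x z" "le z y" "z \<noteq> y"
  shows "{w\<in>S. le x w \<and> le w z} \<subset> {w\<in>S. le x w \<and> le w y}"
proof
  show "{w\<in>S. le x w \<and> le w z} \<subseteq> {w\<in>S. le x w \<and> le w y}"
    using po_trans[OF po _ z(1) y _ z(3)] by blast
  have "y \<notin> {w\<in>S. le x w \<and> le w z}"
    using po_antisym[OF po z(1) y z(3)] z(4) by blast
  moreover have "y \<in> {w\<in>S. le x w \<and> le w y}" using xy y po_refl[OF po y] by auto
  ultimately show "{w\<in>S. le x w \<and> le w z} \<noteq> {w\<in>S. le x w \<and> le w y}" by blast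
qed

lemma interval_split:
  assumes po: "porder S le" and x: "x \<in> S" and y: "y \<in> S" and xy: "le x y"
  shows "{z\<in>S. le x z \<and> le z y} = insert y {z\<in>S. le x z \<and> le z y \<and> z \<noteq> y}"
  using xy y po_refl[OF po y] by auto

lemma mob_unique_aux:
  assumes fin: "finite S" and po: "porder S le" and m: "mob_prop S le m" and m': "mob_prop S le m'"
  shows "x \<in> S \<Longrightarrow> y \<in> S \<Longrightarrow> le x y \<Longrightarrow> m x y = m' x y"
proof (induction "card {z\<in>S. le x z \<and> le z y}" arbitrary: y rule: less_induct)
  case less
  define I' where "I' = {z\<in>S. le x z \<and> le z y \<and> z \<noteq> y}"
  have split: "{z\<in>S. le x z \<and> le z y} = insert y I'" "y \<notin> I'"
    using interval_split[OF po less.prems] unfolding I'_def by auto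
  have finI: "finite I'" using fin unfolding I'_def by auto
  have eq: "m x z = m' x z" if z: "z \<in> I'" for z
  proof -
    have "card {w\<in>S. le x w \<and> le w z} < card {z\<in>S. le x z \<and> le z y}"
      using interval_psub[OF po less.prems] z fin unfolding I'_def by (intro psubset_card_mono) auto
    then show "m x z = m' x z" using less.hyps[of z] z less.prems unfolding I'_def by auto
  qed
  have s1: "(\<Sum>z\<in>{z\<in>S. le x z \<and> le z y}. m x z) = (\<Sum>z\<in>{z\<in>S. le x z \<and> le z y}. m' x z)"
    using m m' less.prems unfolding mob_prop_def by simp
  have "m x y + (\<Sum>z\<in>I'. m x z) = m' x y + (\<Sum>z\<in>I'. m' x z)"
    using s1 unfolding split(1) sum.insert[OF finI split(2)] .
  moreover have "(\<Sum>z\<in>I'. m x z) = (\<Sum>z\<in>I'. m' x z)" using eq by (rule sum.cong[OF refl])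
  ultimately show ?case by simp
qed

lemma mob_unique:
  assumes "finite S" "porder S le" "mob_prop S le m" "mob_prop S le m'"
  shows "m = m'"
proof (intro ext)
  fix x y show "m x y = m' x y"
  proof (cases "x \<in> S \<and> y \<in> S \<and> le x y")
    case True then show ?thesis using mob_unique_aux[OF assms] by blast
  next
    case False then show ?thesis using assms(3,4) unfolding mob_prop_def by auto
  qed
qed

fun mr :: "'b set \<Rightarrow> ('b \<Rightarrow> 'b \<Rightarrow> bool) \<Rightarrow> nat \<Rightarrow> 'b \<Rightarrow> 'b \<Rightarrow> int" where
  "mr S le 0 x y = 0"
| "mr S le (Suc k) x y = (if x \<in> S \<and> y \<in> S \<and> le x y then
      (if x = y then 1 else - (\<Sum>z\<in>{z\<in>S. le x z \<and> le z y \<and> z \<noteq> y}. mr S le k x z)) else 0)"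

lemma mr_stab:
  assumes fin: "finite S" and po: "porder S le"
  shows "card {z\<in>S. le x z \<and> le z y} \<le> k \<Longrightarrow> k \<le> k' \<Longrightarrow> mr S le k x y = mr S le k' x y"
proof (induction k arbitrary: k' y)
  case 0
  show ?case
  proof (cases "x \<in> S \<and> y \<in> S \<and> le x y")
    case True
    then have "y \<in> {z\<in>S. le x z \<and> le z y}" using po_refl[OF po] by auto
    then have "card {z\<in>S. le x z \<and> le z y} > 0" using fin by (intro card_gt_0_iff[THEN iffD2]) auto
    then show ?thesis using 0 by simp
  next
    case False then show ?thesis by (cases k') auto
  qed
next
  case (Suc k)
  then obtain k'' where k'': "k' = Suc k''" "k \<le> k''" by (cases k') auto
  have eq: "mr S le k x z = mr S le k'' x z" if z: "z \<in> {z\<in>S. le x z \<and> le z y \<and> z \<noteq> y}" and xy: "x \<in> S \<and> y \<in> S \<and> le x y" for z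
  proof -
    have "card {w\<in>S. le x w \<and> le w z} < card {z\<in>S. le x z \<and> le z y}"
      using interval_psub[OF po] z xy fin by (intro psubset_card_mono) auto
    then show ?thesis using Suc.IH[of z k''] Suc.prems k'' by auto
  qed
  show ?case unfolding k'' using eq by (auto intro!: sum.cong)
qed

lemma mob_exists:
  assumes fin: "finite S" and po: "porder S le"
  shows "mob_prop S le (mr S le (card S))"
  unfolding mob_prop_def
proof (intro conjI allI impI ballI)
  fix x y assume "\<not> (x \<in> S \<and> y \<in> S \<and> le x y)"
  then show "mr S le (card S) x y = 0" by (cases "card S") auto
next
  fix x y assume xy: "x \<in> S" "y \<in> S" "le x y"
  have cS: "card S > 0" using xy fin card_gt_0_iff by blast
  then obtain N where N: "card S = Suc N" by (cases "card S") auto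
  show "(\<Sum>z\<in>{z\<in>S. le x z \<and> le z y}. mr S le (card S) x z) = (if x = y then 1 else 0)"
  proof (cases "x = y")
    case True
    then have "{z\<in>S. le x z \<and> le z y} = {x}" using xy po_antisym[OF po] po_refl[OF po] by auto
    then show ?thesis using True xy N by simp
  next
    case False
    define I' where "I' = {z\<in>S. le x z \<and> le z y \<and> z \<noteq> y}"
    have split: "{z\<in>S. le x z \<and> le z y} = insert y I'" "y \<notin> I'"
      using interval_split[OF po xy] unfolding I'_def by auto
    have finI: "finite I'" using fin unfolding I'_def by auto
    have st: "mr S le N x z = mr S le (Suc N) x z" if z: "z \<in> I'" for z
    proof -
      have "card {w\<in>S. le x w \<and> le w z} \<le> card S"
        using fin by (intro card_mono) auto
      moreover have "card {w\<in>S. le x w \<and> le w z} < card {w\<in>S. le x w \<and> le w y}"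
        using interval_psub[OF po xy] z fin unfolding I'_def by (intro psubset_card_mono) auto
      moreover have "card {w\<in>S. le x w \<and> le w y} \<le> card S"
        using fin by (intro card_mono) auto
      ultimately show ?thesis using mr_stab[OF fin po, of x z N "Suc N"] N by auto
    qed
    have "(\<Sum>z\<in>{z\<in>S. le x z \<and> le z y}. mr S le (card S) x z)
        = mr S le (Suc N) x y + (\<Sum>z\<in>I'. mr S le (Suc N) x z)"
      unfolding split(1) N sum.insert[OF finI split(2)] ..
    also have "mr S le (Suc N) x y = - (\<Sum>z\<in>I'. mr S le N x z)"
      using xy False unfolding I'_def by simp
    also have "(\<Sum>z\<in>I'. mr S le N x z) = (\<Sum>z\<in>I'. mr S le (Suc N) x z)"
      using st by (rule sum.cong[OF refl])
    finally show ?thesis using False by simp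
  qed
qed

lemma moebius_eq:
  assumes "finite S" "porder S le" "mob_prop S le m"
  shows "moebius S le = m"
proof -
  have "moebius S le = (THE m. mob_prop S le m)"
    unfolding moebius_def mob_prop_def by simp
  also have "\<dots> = m"
  proof (rule the_equality)
    show "mob_prop S le m" by fact
    show "\<And>m'. mob_prop S le m' \<Longrightarrow> m' = m" using mob_unique[OF assms(1,2) _ assms(3)] by blast
  qed
  finally show ?thesis .
qed

lemma moebius_prop:
  assumes "finite S" "porder S le"
  shows "mob_prop S le (moebius S le)"
proof -
  have e: "moebius S le = mr S le (card S)" by (rule moebius_eq[OF assms mob_exists[OF assms]])
  show ?thesis unfolding e by (rule mob_exists[OF assms])
qed

lemma porder_iso:
  assumes po: "porder S le" and bij: "bij_betw f S S'"
    and ord: "\<And>x y. x \<in> S \<Longrightarrow> y \<in> S \<Longrightarrow> le' (f x) (f y) \<longleftrightarrow> le x y"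
  shows "porder S' le'"
proof -
  have S': "S' = f ` S" using bij by (simp add: bij_betw_def)
  have inj: "inj_on f S" using bij by (simp add: bij_betw_def)
  show ?thesis unfolding porder_def S'
  proof (intro conjI ballI impI)
    fix u assume "u \<in> f ` S" then obtain x where "x \<in> S" "u = f x" by auto
    then show "le' u u" using ord po_refl[OF po] by auto
  next
    fix u v assume "u \<in> f ` S" "v \<in> f ` S" "le' u v \<and> le' v u"
    then obtain x y where "x \<in> S" "y \<in> S" "u = f x" "v = f y" "le' (f x) (f y)" "le' (f y) (f x)" by auto
    then show "u = v" using ord po_antisym[OF po] by metis
  next
    fix u v w assume "u \<in> f ` S" "v \<in> f ` S" "w \<in> f ` S" "le' u v" "le' v w"
    then obtain x y z where "x \<in> S" "y \<in> S" "z \<in> S" "u = f x" "v = f y" "w = f z"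
      "le' (f x) (f y)" "le' (f y) (f z)" by auto
    then show "le' u w" using ord po_trans[OF po] by metis
  qed
qed

lemma moebius_iso:
  assumes fin: "finite S" and po: "porder S le" and bij: "bij_betw f S S'"
    and ord: "\<And>x y. x \<in> S \<Longrightarrow> y \<in> S \<Longrightarrow> le' (f x) (f y) \<longleftrightarrow> le x y"
    and x: "x \<in> S" and y: "y \<in> S"
  shows "moebius S' le' (f x) (f y) = moebius S le x y"
proof -
  define g where "g = inv_into S f"
  have po': "porder S' le'" by (rule porder_iso[OF po bij ord])
  have fin': "finite S'" using bij fin bij_betw_finite by blast
  have S': "S' = f ` S" using bij by (simp add: bij_betw_def)
  have inj: "inj_on f S" using bij by (simp add: bij_betw_def)
  have gf: "\<And>x. x \<in> S \<Longrightarrow> g (f x) = x" unfolding g_def using inj by simp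
  have fg: "\<And>u. u \<in> S' \<Longrightarrow> f (g u) = u" unfolding g_def S' by (simp add: f_inv_into_f)
  have gS: "\<And>u. u \<in> S' \<Longrightarrow> g u \<in> S" unfolding g_def S' by (simp add: inv_into_into)
  define m where "m = (\<lambda>u v. if u \<in> S' \<and> v \<in> S' \<and> le' u v then moebius S le (g u) (g v) else 0)"
  have mp: "mob_prop S le (moebius S le)" by (rule moebius_prop[OF fin po])
  have "mob_prop S' le' m"
    unfolding mob_prop_def
  proof (intro conjI allI impI ballI)
    fix u v assume "\<not> (u \<in> S' \<and> v \<in> S' \<and> le' u v)" then show "m u v = 0" unfolding m_def by auto
  next
    fix u v assume uv: "u \<in> S'" "v \<in> S'" "le' u v"
    have le: "le (g u) (g v)" using ord[OF gS[OF uv(1)] gS[OF uv(2)]] uv fg by simp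
    have img: "{w\<in>S'. le' u w \<and> le' w v} = f ` {z\<in>S. le (g u) z \<and> le z (g v)}"
    proof (intro set_eqI iffI)
      fix w assume "w \<in> {w\<in>S'. le' u w \<and> le' w v}"
      then have w: "w \<in> S'" "le' u w" "le' w v" by auto
      have "le (g u) (g w)" "le (g w) (g v)"
        using ord[OF gS[OF uv(1)] gS[OF w(1)]] ord[OF gS[OF w(1)] gS[OF uv(2)]] w uv fg by simp_all
      moreover have "w = f (g w)" using fg w by simp
      ultimately show "w \<in> f ` {z\<in>S. le (g u) z \<and> le z (g v)}" using gS[OF w(1)] by blast
    next
      fix w assume "w \<in> f ` {z\<in>S. le (g u) z \<and> le z (g v)}"
      then obtain z where z: "z \<in> S" "le (g u) z" "le z (g v)" "w = f z" by auto
      have "le' u w" "le' w v" using ord[OF gS[OF uv(1)] z(1)] ord[OF z(1) gS[OF uv(2)]] z uv fg by simp_all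
      then show "w \<in> {w\<in>S'. le' u w \<and> le' w v}" using z S' by auto
    qed
    have "(\<Sum>w\<in>{w\<in>S'. le' u w \<and> le' w v}. m u w) = (\<Sum>z\<in>{z\<in>S. le (g u) z \<and> le z (g v)}. m u (f z))"
    proof -
      have injs: "inj_on f {z\<in>S. le (g u) z \<and> le z (g v)}" using inj by (rule inj_on_subset) auto
      show ?thesis unfolding img sum.reindex[OF injs] by (simp add: o_def)
    qed
    also have "\<dots> = (\<Sum>z\<in>{z\<in>S. le (g u) z \<and> le z (g v)}. moebius S le (g u) z)"
    proof (rule sum.cong[OF refl])
      fix z assume z: "z \<in> {z\<in>S. le (g u) z \<and> le z (g v)}"
      then have "le' u (f z)" using ord[OF gS[OF uv(1)], of z] uv fg by auto
      then show "m u (f z) = moebius S le (g u) z" unfolding m_def using z uv gf S' by auto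
    qed
    also have "\<dots> = (if g u = g v then 1 else 0)" using mp le gS uv unfolding mob_prop_def by auto
    also have "(g u = g v) = (u = v)" using fg[OF uv(1)] fg[OF uv(2)] by metis
    finally show "(\<Sum>w\<in>{w\<in>S'. le' u w \<and> le' w v}. m u w) = (if u = v then 1 else 0)" .
  qed
  then have "moebius S' le' = m" by (rule moebius_eq[OF fin' po'])
  then show ?thesis unfolding m_def using x y gf S' ord[OF x y] mp unfolding mob_prop_def by auto
qed

lemma moebius_sub:
  assumes fin: "finite S" and po: "porder S le" and T: "T \<subseteq> S"
    and conv: "\<And>x y z. x \<in> T \<Longrightarrow> y \<in> T \<Longrightarrow> z \<in> S \<Longrightarrow> le x z \<Longrightarrow> le z y \<Longrightarrow> z \<in> T"
    and x: "x \<in> T" and y: "y \<in> T"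
  shows "moebius T le x y = moebius S le x y"
proof -
  have poT: "porder T le" unfolding porder_def
    using po_refl[OF po] po_antisym[OF po] po_trans[OF po] T by (meson subsetD)
  have finT: "finite T" using fin T finite_subset by blast
  define m where "m = (\<lambda>u v. if u \<in> T \<and> v \<in> T \<and> le u v then moebius S le u v else 0)"
  have mp: "mob_prop S le (moebius S le)" by (rule moebius_prop[OF fin po])
  have "mob_prop T le m"
    unfolding mob_prop_def
  proof (intro conjI allI impI ballI)
    fix u v assume "\<not> (u \<in> T \<and> v \<in> T \<and> le u v)" then show "m u v = 0" unfolding m_def by auto
  next
    fix u v assume uv: "u \<in> T" "v \<in> T" "le u v"
    have eqs: "{w\<in>T. le u w \<and> le w v} = {w\<in>S. le u w \<and> le w v}"
    proof (intro set_eqI iffI)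
      fix w assume "w \<in> {w\<in>S. le u w \<and> le w v}" then show "w \<in> {w\<in>T. le u w \<and> le w v}"
        using conv[OF uv(1,2)] by blast
    qed (use T in auto)
    have "(\<Sum>w\<in>{w\<in>T. le u w \<and> le w v}. m u w) = (\<Sum>w\<in>{w\<in>S. le u w \<and> le w v}. moebius S le u w)"
    proof (unfold eqs, rule sum.cong[OF refl])
      fix w assume w: "w \<in> {w\<in>S. le u w \<and> le w v}"
      then have "w \<in> T" using conv[OF uv(1,2)] by blast
      then show "m u w = moebius S le u w" using w uv unfolding m_def by simp
    qed
    also have "\<dots> = (if u = v then 1 else 0)" using mp uv T unfolding mob_prop_def by blast
    finally show "(\<Sum>w\<in>{w\<in>T. le u w \<and> le w v}. m u w) = (if u = v then 1 else 0)" .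
  qed
  then have "moebius T le = m" by (rule moebius_eq[OF finT poT])
  moreover have "\<not> le x y \<Longrightarrow> moebius S le x y = 0" using mp x y T unfolding mob_prop_def by blast
  ultimately show ?thesis unfolding m_def using x y by auto
qed

lemma moebius_prod:
  assumes finI: "finite I" and fin: "\<And>i. i \<in> I \<Longrightarrow> finite (S i)"
    and po: "\<And>i. i \<in> I \<Longrightarrow> porder (S i) (le i)"
    and x: "x \<in> PiE I S" and y: "y \<in> PiE I S"
  shows "moebius (PiE I S) (\<lambda>x y. \<forall>i\<in>I. le i (x i) (y i)) x y
         = (\<Prod>i\<in>I. moebius (S i) (le i) (x i) (y i))"
proof -
  define ple where "ple = (\<lambda>x y. \<forall>i\<in>I. le i (x i) (y i))"
  have poP: "porder (PiE I S) ple"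
    unfolding porder_def ple_def
  proof (intro conjI ballI impI)
    fix x i assume "x \<in> PiE I S" "i \<in> I" then show "le i (x i) (x i)" using po_refl[OF po] by auto
  next
    fix x y assume xy: "x \<in> PiE I S" "y \<in> PiE I S" "(\<forall>i\<in>I. le i (x i) (y i)) \<and> (\<forall>i\<in>I. le i (y i) (x i))"
    show "x = y"
    proof (rule PiE_ext[OF xy(1,2)])
      fix i assume "i \<in> I" then show "x i = y i" using xy po_antisym[OF po] by (meson PiE_mem)
    qed
  next
    fix x y z i assume "x \<in> PiE I S" "y \<in> PiE I S" "z \<in> PiE I S" "\<forall>i\<in>I. le i (x i) (y i)" "\<forall>i\<in>I. le i (y i) (z i)" "i \<in> I"
    then show "le i (x i) (z i)" using po_trans[OF po] by (meson PiE_mem)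
  qed
  have finP: "finite (PiE I S)" using finI fin by (intro finite_PiE) auto
  define m where "m = (\<lambda>x y. if x \<in> PiE I S \<and> y \<in> PiE I S then (\<Prod>i\<in>I. moebius (S i) (le i) (x i) (y i)) else 0)"
  have mp: "\<And>i. i \<in> I \<Longrightarrow> mob_prop (S i) (le i) (moebius (S i) (le i))" using moebius_prop fin po by blast
  have "mob_prop (PiE I S) ple m"
    unfolding mob_prop_def
  proof (intro conjI allI impI ballI)
    fix u v assume uv: "\<not> (u \<in> PiE I S \<and> v \<in> PiE I S \<and> ple u v)"
    show "m u v = 0"
    proof (cases "u \<in> PiE I S \<and> v \<in> PiE I S")
      case True
      then obtain i where i: "i \<in> I" "\<not> le i (u i) (v i)" using uv unfolding ple_def by auto
      then have "moebius (S i) (le i) (u i) (v i) = 0" using mp[OF i(1)] unfolding mob_prop_def by auto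
      then show ?thesis unfolding m_def using True i finI by (auto intro: prod_zero)
    qed (auto simp: m_def)
  next
    fix u v assume uv: "u \<in> PiE I S" "v \<in> PiE I S" "ple u v"
    have eqs: "{w\<in>PiE I S. ple u w \<and> ple w v} = PiE I (\<lambda>i. {z\<in>S i. le i (u i) z \<and> le i z (v i)})"
      unfolding ple_def by (auto simp: PiE_iff extensional_def)
    have "(\<Sum>w\<in>{w\<in>PiE I S. ple u w \<and> ple w v}. m u w)
        = (\<Sum>w\<in>PiE I (\<lambda>i. {z\<in>S i. le i (u i) z \<and> le i z (v i)}). \<Prod>i\<in>I. moebius (S i) (le i) (u i) (w i))"
      unfolding eqs by (rule sum.cong[OF refl]) (use uv in \<open>auto simp: m_def PiE_iff\<close>)
    also have "\<dots> = (\<Prod>i\<in>I. \<Sum>z\<in>{z\<in>S i. le i (u i) z \<and> le i z (v i)}. moebius (S i) (le i) (u i) z)"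
      by (rule prod_sum_PiE[symmetric]) (use finI fin in auto)
    also have "\<dots> = (\<Prod>i\<in>I. if u i = v i then 1 else 0)"
    proof (rule prod.cong[OF refl])
      fix i assume i: "i \<in> I"
      have "u i \<in> S i" "v i \<in> S i" "le i (u i) (v i)" using uv i unfolding ple_def by auto
      then show "(\<Sum>z\<in>{z\<in>S i. le i (u i) z \<and> le i z (v i)}. moebius (S i) (le i) (u i) z) = (if u i = v i then 1 else 0)"
        using mp[OF i] unfolding mob_prop_def by blast
    qed
    also have "\<dots> = (if u = v then 1 else 0)"
    proof (cases "u = v")
      case True then show ?thesis by simp
    next
      case False
      then obtain i where "i \<in> I" "u i \<noteq> v i" using PiE_ext[OF uv(1,2)] by blast
      then show ?thesis using False finI by (auto intro: prod_zero)
    qed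
    finally show "(\<Sum>w\<in>{w\<in>PiE I S. ple u w \<and> ple w v}. m u w) = (if u = v then 1 else 0)" .
  qed
  then have "moebius (PiE I S) ple = m" by (rule moebius_eq[OF finP poP])
  then show ?thesis unfolding m_def ple_def[symmetric] using x y by auto
qed

lemma part_disj: "partition_on A p \<Longrightarrow> B \<in> p \<Longrightarrow> C \<in> p \<Longrightarrow> x \<in> B \<Longrightarrow> x \<in> C \<Longrightarrow> B = C"
  unfolding partition_on_def disjoint_def by (metis IntI empty_iff)

lemma part_sub: "partition_on A p \<Longrightarrow> B \<in> p \<Longrightarrow> B \<subseteq> A"
  unfolding partition_on_def by (metis Union_upper)

lemma part_ne: "partition_on A p \<Longrightarrow> B \<in> p \<Longrightarrow> B \<noteq> {}"
  unfolding partition_on_def by metis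

lemma part_cover: "partition_on A p \<Longrightarrow> x \<in> A \<Longrightarrow> \<exists>B\<in>p. x \<in> B"
  unfolding partition_on_def by (metis UnionE)

lemma block_of_eq:
  assumes "partition_on A p" "B \<in> p" "x \<in> B" shows "block_of p x = B"
  unfolding block_of_def
proof (rule the_equality)
  show "B \<in> p \<and> x \<in> B" using assms by simp
  fix C assume "C \<in> p \<and> x \<in> C" then show "C = B" using part_disj[OF assms(1)] assms by metis
qed

lemma block_of_mem:
  assumes "partition_on A p" "x \<in> A" shows "block_of p x \<in> p \<and> x \<in> block_of p x"
proof -
  obtain B where "B \<in> p" "x \<in> B" using part_cover[OF assms] by blast
  then show ?thesis using block_of_eq[OF assms(1)] by simp
qed

lemma sp_fin: "finite (set_partitions n)"
  unfolding set_partitions_def by (rule finitely_many_partition_on) simp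

lemma sp_part: "p \<in> set_partitions n \<Longrightarrow> partition_on {1..n} p"
  unfolding set_partitions_def by simp

lemma sp_block_sub: "p \<in> set_partitions n \<Longrightarrow> B \<in> p \<Longrightarrow> B \<subseteq> {1..n}"
  by (rule part_sub[OF sp_part])

lemma sp_block_fin: "p \<in> set_partitions n \<Longrightarrow> B \<in> p \<Longrightarrow> finite B"
  by (rule finite_subset[OF sp_block_sub]) auto

lemma sp_fin_p: "p \<in> set_partitions n \<Longrightarrow> finite p"
  by (rule finite_elements[OF _ sp_part]) auto

lemma refines_antisym:
  assumes px: "partition_on A x" and xy: "refines x y" "refines y x"
  shows "x \<subseteq> y"
proof
  fix B assume B: "B \<in> x"
  obtain C where C: "C \<in> y" "B \<subseteq> C" using xy(1) B unfolding refines_def by blast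
  obtain B' where B': "B' \<in> x" "C \<subseteq> B'" using xy(2) C(1) unfolding refines_def by blast
  obtain b where b: "b \<in> B" using part_ne[OF px B] by blast
  have "b \<in> B'" using b C B' by blast
  then have "B = B'" using part_disj[OF px B B'(1) b] by simp
  then have "B = C" using C B' by (metis subset_antisym)
  then show "B \<in> y" using C by simp
qed

lemma sp_porder: "porder (set_partitions n) refines"
  unfolding porder_def
proof (intro conjI ballI impI)
  fix x assume "x \<in> set_partitions n" then show "refines x x" unfolding refines_def by blast
next
  fix x y assume xy: "x \<in> set_partitions n" "y \<in> set_partitions n" "refines x y \<and> refines y x"
  show "x = y"
    using refines_antisym[OF sp_part[OF xy(1)]] refines_antisym[OF sp_part[OF xy(2)]] xy(3)
    by (metis subset_antisym)
next
  fix x y z assume "refines x y" "refines y z" then show "refines x z"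
    unfolding refines_def by (meson order_trans)
qed

section \<open>Relabeling\<close>

definition rk :: "nat set \<Rightarrow> nat \<Rightarrow> nat" where
  "rk B i = Suc (card {b\<in>B. b < i})"

definition en :: "nat set \<Rightarrow> nat \<Rightarrow> nat" where
  "en B t = sorted_list_of_set B ! (t - 1)"

lemma rk_mono:
  assumes "finite B" "i \<in> B" "j \<in> B" "i < j" shows "rk B i < rk B j"
proof -
  have "{b\<in>B. b < i} \<subset> {b\<in>B. b < j}" using assms by auto
  then show ?thesis unfolding rk_def using assms(1) by (simp add: psubset_card_mono)
qed

lemma rk_mono_iff:
  assumes "finite B" "i \<in> B" "j \<in> B" shows "rk B i < rk B j \<longleftrightarrow> i < j"
proof
  assume "i < j" then show "rk B i < rk B j" using rk_mono[OF assms] by simp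
next
  assume a: "rk B i < rk B j"
  show "i < j"
  proof (rule ccontr)
    assume "\<not> i < j"
    then have "j < i \<or> j = i" by auto
    then show False using rk_mono[OF assms(1,3,2)] a by auto
  qed
qed

lemma rk_le_iff:
  assumes "finite B" "i \<in> B" "j \<in> B" shows "rk B i \<le> rk B j \<longleftrightarrow> i \<le> j"
  using rk_mono_iff[OF assms(1,3,2)] by linarith

lemma rk_inj: "finite B \<Longrightarrow> inj_on (rk B) B"
proof (rule inj_onI)
  fix x y assume f: "finite B" and xy: "x \<in> B" "y \<in> B" "rk B x = rk B y"
  show "x = y"
  proof (rule ccontr)
    assume "x \<noteq> y" then have "x < y \<or> y < x" by auto
    then show False using rk_mono[OF f xy(1,2)] rk_mono[OF f xy(2,1)] xy(3) by auto
  qed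
qed

lemma rk_range: "finite B \<Longrightarrow> i \<in> B \<Longrightarrow> rk B i \<in> {1..card B}"
proof -
  assume a: "finite B" "i \<in> B"
  have "{b\<in>B. b < i} \<subset> B" using a by auto
  then have "card {b\<in>B. b < i} < card B" using a by (simp add: psubset_card_mono)
  then show ?thesis unfolding rk_def by simp
qed

lemma rk_bij: "finite B \<Longrightarrow> bij_betw (rk B) B {1..card B}"
proof -
  assume f: "finite B"
  have "rk B ` B \<subseteq> {1..card B}" using rk_range[OF f] by blast
  moreover have "card (rk B ` B) = card {1..card B}" using card_image[OF rk_inj[OF f]] by simp
  ultimately have "rk B ` B = {1..card B}" by (intro card_subset_eq) auto
  then show ?thesis using rk_inj[OF f] unfolding bij_betw_def by blast
qed

lemma rk_image: "finite B \<Longrightarrow> rk B ` B = {1..card B}"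
  by (rule bij_betw_imp_surj_on[OF rk_bij])

lemma sorted_list_image:
  fixes f :: "nat \<Rightarrow> nat"
  assumes fin: "finite C" and mono: "\<And>i j. i \<in> C \<Longrightarrow> j \<in> C \<Longrightarrow> i < j \<Longrightarrow> f i < f j"
  shows "sorted_list_of_set (f ` C) = map f (sorted_list_of_set C)"
proof -
  have inj: "inj_on f C"
  proof (rule inj_onI)
    fix x y assume xy: "x \<in> C" "y \<in> C" "f x = f y"
    show "x = y"
    proof (rule ccontr)
      assume "x \<noteq> y" then have "x < y \<or> y < x" by auto
      then show False using mono[OF xy(1,2)] mono[OF xy(2,1)] xy(3) by auto
    qed
  qed
  have "sorted_wrt (<) (sorted_list_of_set C)" by (rule strict_sorted_list_of_set)
  then have "sorted_wrt (\<lambda>x y. f x < f y) (sorted_list_of_set C)"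
    by (rule sorted_wrt_mono_rel[rotated]) (use fin in \<open>auto intro: mono\<close>)
  then have "sorted_wrt (<) (map f (sorted_list_of_set C))"
    unfolding sorted_wrt_map .
  moreover have "set (map f (sorted_list_of_set C)) = f ` C" using fin by simp
  moreover have "length (map f (sorted_list_of_set C)) = card (f ` C)"
    using fin card_image[OF inj] by simp
  ultimately show ?thesis
    using sorted_list_of_set_unique[of "f ` C" "map f (sorted_list_of_set C)"] fin
    by (simp add: sorted_wrt_map)
qed

definition rkinv :: "nat set \<Rightarrow> nat \<Rightarrow> nat" where
  "rkinv B = inv_into B (rk B)"

lemma sorted_B:
  assumes f: "finite B"
  shows "sorted_list_of_set B = map (rkinv B) [1..<card B + 1]"
proof -
  have bij: "bij_betw (rkinv B) {1..card B} B" unfolding rkinv_def by (rule bij_betw_inv_into[OF rk_bij[OF f]])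
  have rr: "rk B (rkinv B t) = t" if "t \<in> {1..card B}" for t
  proof -
    have "t \<in> rk B ` B" using that rk_image[OF f] by simp
    then show ?thesis unfolding rkinv_def by (rule f_inv_into_f)
  qed
  have mono: "rkinv B s < rkinv B t" if st: "s \<in> {1..card B}" "t \<in> {1..card B}" "s < t" for s t
  proof -
    have m: "rkinv B s \<in> B" "rkinv B t \<in> B" using bij_betw_apply[OF bij] st by blast+
    have "rk B (rkinv B s) < rk B (rkinv B t)" using rr[OF st(1)] rr[OF st(2)] st(3) by simp
    then show ?thesis using rk_mono_iff[OF f m] by simp
  qed
  have "sorted_list_of_set (rkinv B ` {1..card B}) = map (rkinv B) (sorted_list_of_set {1..card B})"
    by (rule sorted_list_image) (use mono in auto)
  moreover have "rkinv B ` {1..card B} = B" by (rule bij_betw_imp_surj_on[OF bij])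
  moreover have "sorted_list_of_set {1..card B} = [1..<card B + 1]"
    by (metis atLeastLessThanSuc_atLeastAtMost sorted_list_of_set_range Suc_eq_plus1)
  ultimately show ?thesis by simp
qed

lemma en_eq_rkinv:
  assumes f: "finite B" and t: "t \<in> {1..card B}" shows "en B t = rkinv B t"
proof -
  have "t - 1 < card B" using t by auto
  then have l: "t - 1 < length [1..<card B + 1]" by simp
  have "map (rkinv B) [1..<card B + 1] ! (t - 1) = rkinv B ([1..<card B + 1] ! (t - 1))"
    by (rule nth_map[OF l])
  moreover have "[1..<card B + 1] ! (t - 1) = 1 + (t - 1)" by (rule nth_upt) (use t in auto)
  ultimately show ?thesis unfolding en_def sorted_B[OF f] using t by simp
qed

lemma en_rk:
  assumes f: "finite B" and i: "i \<in> B" shows "en B (rk B i) = i"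
proof -
  have "en B (rk B i) = rkinv B (rk B i)" using en_eq_rkinv[OF f rk_range[OF f i]] .
  also have "\<dots> = i" unfolding rkinv_def using inv_into_f_f[OF rk_inj[OF f] i] .
  finally show ?thesis .
qed

lemma rk_en:
  assumes f: "finite B" and t: "t \<in> {1..card B}" shows "rk B (en B t) = t \<and> en B t \<in> B"
proof -
  have t': "t \<in> rk B ` B" using t rk_image[OF f] by simp
  show ?thesis unfolding en_eq_rkinv[OF f t] rkinv_def
    using f_inv_into_f[OF t'] inv_into_into[OF t'] by simp
qed

lemma en_mono: "finite B \<Longrightarrow> s \<in> {1..card B} \<Longrightarrow> t \<in> {1..card B} \<Longrightarrow> s < t \<Longrightarrow> en B s < en B t"
  using rk_en[of B s] rk_en[of B t] rk_mono_iff[of B "en B s" "en B t"] by simp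

lemma en_inj: "finite B \<Longrightarrow> inj_on (en B) {1..card B}"
proof (rule inj_onI)
  fix x y assume f: "finite B" and xy: "x \<in> {1..card B}" "y \<in> {1..card B}" "en B x = en B y"
  then show "x = y" using rk_en[OF f xy(1)] rk_en[OF f xy(2)] by metis
qed

lemma en_range: "finite B \<Longrightarrow> t \<in> {1..card B} \<Longrightarrow> en B t \<in> B"
  using rk_en by blast

lemma en_image: "finite B \<Longrightarrow> en B ` {1..card B} = B"
proof -
  assume f: "finite B"
  have "en B ` {1..card B} \<subseteq> B" using en_range[OF f] by blast
  moreover have "B \<subseteq> en B ` {1..card B}"
  proof
    fix i assume "i \<in> B" then show "i \<in> en B ` {1..card B}"
      using en_rk[OF f \<open>i \<in> B\<close>] rk_range[OF f \<open>i \<in> B\<close>] by (metis image_eqI)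
  qed
  ultimately show ?thesis by blast
qed

definition Tm :: "nat set set \<Rightarrow> nat set set \<Rightarrow> nat set \<Rightarrow> nat set set" where
  "Tm p s = (\<lambda>B\<in>p. (\<lambda>C. rk B ` C) ` {C\<in>s. C \<subseteq> B})"

definition Um :: "nat set set \<Rightarrow> (nat set \<Rightarrow> nat set set) \<Rightarrow> nat set set" where
  "Um p t = (\<Union>B\<in>p. (\<lambda>D. en B ` D) ` t B)"

lemma partition_on_UN:
  assumes p: "partition_on A p" and Q: "\<And>B. B \<in> p \<Longrightarrow> partition_on B (Q B)"
  shows "partition_on A (\<Union>B\<in>p. Q B)"
proof (rule partition_onI)
  show "\<Union>(\<Union>B\<in>p. Q B) = A"
  proof -
    have "\<Union>(\<Union>B\<in>p. Q B) = (\<Union>B\<in>p. \<Union>(Q B))" by blast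
    also have "\<dots> = (\<Union>B\<in>p. B)" using partition_onD1[OF Q] by (intro SUP_cong) auto
    also have "\<dots> = A" using partition_onD1[OF p] by simp
    finally show ?thesis .
  qed
  show "{} \<notin> (\<Union>B\<in>p. Q B)" using partition_onD3[OF Q] by blast
  fix D D' assume D: "D \<in> (\<Union>B\<in>p. Q B)" and D': "D' \<in> (\<Union>B\<in>p. Q B)" and ne: "D \<noteq> D'"
  obtain B where B: "B \<in> p" "D \<in> Q B" using D by blast
  obtain B' where B': "B' \<in> p" "D' \<in> Q B'" using D' by blast
  show "disjnt D D'"
  proof (cases "B = B'")
    case True
    then show ?thesis using partition_onD2[OF Q[OF B(1)]] B B' ne unfolding disjoint_def disjnt_def by blast
  next
    case False
    have "D \<subseteq> B" using part_sub[OF Q[OF B(1)] B(2)] .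
    moreover have "D' \<subseteq> B'" using part_sub[OF Q[OF B'(1)] B'(2)] .
    moreover have "B \<inter> B' = {}" using partition_onD2[OF p] B(1) B'(1) False unfolding disjoint_def by blast
    ultimately show ?thesis unfolding disjnt_def by blast
  qed
qed

lemma porder_subset: "porder S le \<Longrightarrow> T \<subseteq> S \<Longrightarrow> porder T le"
  unfolding porder_def by (meson subsetD)

context
  fixes n :: nat and p :: "nat set set"
  assumes p: "p \<in> set_partitions n"
begin

lemma pp: "partition_on {1..n} p" by (rule sp_part[OF p])

lemma Bfin: "B \<in> p \<Longrightarrow> finite B" by (rule sp_block_fin[OF p])

lemma sub_block:
  assumes s: "s \<in> set_partitions n" "refines s p" and C: "C \<in> s"
  shows "\<exists>B\<in>p. C \<subseteq> B"
  using s(2) C unfolding refines_def by blast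

lemma sub_block_uniq:
  assumes s: "s \<in> set_partitions n" and C: "C \<in> s" and B: "B \<in> p" "C \<subseteq> B" and B': "B' \<in> p" "C \<subseteq> B'"
  shows "B = B'"
proof -
  obtain c where "c \<in> C" using part_ne[OF sp_part[OF s] C] by blast
  then show ?thesis using part_disj[OF pp B(1) B'(1)] B B' by blast
qed

lemma restr_part:
  assumes s: "s \<in> set_partitions n" "refines s p" and B: "B \<in> p"
  shows "partition_on B {C\<in>s. C \<subseteq> B}"
proof (rule partition_onI)
  show "\<Union>{C\<in>s. C \<subseteq> B} = B"
  proof (intro equalityI subsetI)
    fix b assume "b \<in> \<Union>{C\<in>s. C \<subseteq> B}" then show "b \<in> B" by blast
  next
    fix b assume b: "b \<in> B"
    have "b \<in> {1..n}" using part_sub[OF pp B] b by blast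
    then obtain C where C: "C \<in> s" "b \<in> C" using part_cover[OF sp_part[OF s(1)]] by blast
    obtain B' where B': "B' \<in> p" "C \<subseteq> B'" using sub_block[OF s C(1)] by blast
    have "B' = B" using part_disj[OF pp B'(1) B] B' C b by blast
    then show "b \<in> \<Union>{C\<in>s. C \<subseteq> B}" using C B' by blast
  qed
  show "{} \<notin> {C\<in>s. C \<subseteq> B}" using partition_onD3[OF sp_part[OF s(1)]] by blast
  fix C D assume "C \<in> {C\<in>s. C \<subseteq> B}" "D \<in> {C\<in>s. C \<subseteq> B}" "C \<noteq> D"
  then show "disjnt C D" using partition_onD2[OF sp_part[OF s(1)]] unfolding disjoint_def disjnt_def by blast
qed

lemma Tm_B:
  assumes s: "s \<in> set_partitions n" "refines s p" and B: "B \<in> p"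
  shows "Tm p s B = (\<lambda>C. rk B ` C) ` {C\<in>s. C \<subseteq> B}"
  unfolding Tm_def using B by simp

lemma Tm_part:
  assumes s: "s \<in> set_partitions n" "refines s p" and B: "B \<in> p"
  shows "Tm p s B \<in> set_partitions (card B)"
proof -
  have "partition_on (rk B ` B) ((`) (rk B) ` {C\<in>s. C \<subseteq> B} - {{}})"
    by (rule partition_on_inj_image[OF restr_part[OF s B] rk_inj[OF Bfin[OF B]]])
  moreover have "(`) (rk B) ` {C\<in>s. C \<subseteq> B} - {{}} = (`) (rk B) ` {C\<in>s. C \<subseteq> B}"
    using partition_onD3[OF sp_part[OF s(1)]] by blast
  ultimately show ?thesis unfolding set_partitions_def Tm_B[OF s B] rk_image[OF Bfin[OF B]] by simp
qed

lemma Tm_PiE: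
  assumes s: "s \<in> set_partitions n" "refines s p"
  shows "Tm p s \<in> PiE p (\<lambda>B. set_partitions (card B))"
  unfolding Tm_def restrict_PiE_iff using Tm_part[OF s] Tm_B[OF s] by simp

lemma en_part:
  assumes t: "t \<in> PiE p (\<lambda>B. set_partitions (card B))" and B: "B \<in> p"
  shows "partition_on B ((\<lambda>D. en B ` D) ` t B)"
proof -
  have tB: "partition_on {1..card B} (t B)" using t B unfolding set_partitions_def by auto
  have "partition_on (en B ` {1..card B}) ((`) (en B) ` t B - {{}})"
    by (rule partition_on_inj_image[OF tB en_inj[OF Bfin[OF B]]])
  moreover have "(`) (en B) ` t B - {{}} = (`) (en B) ` t B"
    using partition_onD3[OF tB] by blast
  ultimately show ?thesis unfolding en_image[OF Bfin[OF B]] by simp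
qed

lemma Um_part:
  assumes t: "t \<in> PiE p (\<lambda>B. set_partitions (card B))"
  shows "Um p t \<in> set_partitions n \<and> refines (Um p t) p"
proof
  show "Um p t \<in> set_partitions n"
    unfolding set_partitions_def Um_def using partition_on_UN[OF pp en_part[OF t]] by simp
  show "refines (Um p t) p"
    unfolding refines_def Um_def
  proof
    fix C assume "C \<in> (\<Union>B\<in>p. (\<lambda>D. en B ` D) ` t B)"
    then obtain B where B: "B \<in> p" "C \<in> (\<lambda>D. en B ` D) ` t B" by blast
    then show "\<exists>B\<in>p. C \<subseteq> B" using part_sub[OF en_part[OF t B(1)] B(2)] by blast
  qed
qed

lemma Um_Tm:
  assumes s: "s \<in> set_partitions n" "refines s p"
  shows "Um p (Tm p s) = s"
proof -
  have "\<And>B. B \<in> p \<Longrightarrow> (\<lambda>D. en B ` D) ` Tm p s B = {C\<in>s. C \<subseteq> B}"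
  proof -
    fix B assume B: "B \<in> p"
    have "(\<lambda>D. en B ` D) ` Tm p s B = (\<lambda>C. en B ` rk B ` C) ` {C\<in>s. C \<subseteq> B}"
      unfolding Tm_B[OF s B] image_image ..
    also have "\<dots> = (\<lambda>C. C) ` {C\<in>s. C \<subseteq> B}"
    proof (rule image_cong[OF refl])
      fix C assume "C \<in> {C\<in>s. C \<subseteq> B}"
      then have "C \<subseteq> B" by simp
      then show "en B ` rk B ` C = C" unfolding image_image using en_rk[OF Bfin[OF B]] by (simp add: subset_iff)
    qed
    finally show "(\<lambda>D. en B ` D) ` Tm p s B = {C\<in>s. C \<subseteq> B}" by simp
  qed
  then have "Um p (Tm p s) = (\<Union>B\<in>p. {C\<in>s. C \<subseteq> B})" unfolding Um_def by simp
  also have "\<dots> = s" using sub_block[OF s] by blast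
  finally show ?thesis .
qed

lemma Um_blocks:
  assumes t: "t \<in> PiE p (\<lambda>B. set_partitions (card B))" and B: "B \<in> p"
  shows "{C\<in>Um p t. C \<subseteq> B} = (\<lambda>D. en B ` D) ` t B"
proof (intro equalityI subsetI)
  fix C assume "C \<in> (\<lambda>D. en B ` D) ` t B"
  then show "C \<in> {C\<in>Um p t. C \<subseteq> B}" using part_sub[OF en_part[OF t B]] B unfolding Um_def by blast
next
  fix C assume C: "C \<in> {C\<in>Um p t. C \<subseteq> B}"
  then obtain B' where B': "B' \<in> p" "C \<in> (\<lambda>D. en B' ` D) ` t B'" unfolding Um_def by blast
  have "C \<subseteq> B'" using part_sub[OF en_part[OF t B'(1)] B'(2)] .
  moreover have "C \<noteq> {}" using part_ne[OF en_part[OF t B'(1)] B'(2)] .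
  ultimately have "B' = B" using C part_disj[OF pp B'(1) B] by blast
  then show "C \<in> (\<lambda>D. en B ` D) ` t B" using B' by simp
qed

lemma Tm_Um:
  assumes t: "t \<in> PiE p (\<lambda>B. set_partitions (card B))"
  shows "Tm p (Um p t) = t"
proof (rule ext)
  fix B show "Tm p (Um p t) B = t B"
  proof (cases "B \<in> p")
    case False then show ?thesis using t unfolding Tm_def by (simp add: PiE_def extensional_def)
  next
    case True
    have "Tm p (Um p t) B = (\<lambda>C. rk B ` C) ` {C\<in>Um p t. C \<subseteq> B}"
      unfolding Tm_def using True by simp
    also have "\<dots> = (\<lambda>C. rk B ` C) ` (\<lambda>D. en B ` D) ` t B"
      unfolding Um_blocks[OF t True] ..
    also have "\<dots> = (\<lambda>D. rk B ` en B ` D) ` t B" unfolding image_image ..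
    also have "\<dots> = (\<lambda>D. D) ` t B"
    proof (rule image_cong[OF refl])
      fix D assume D: "D \<in> t B"
      have "D \<subseteq> {1..card B}" using part_sub[OF _ D] t True unfolding set_partitions_def by auto
      then show "rk B ` en B ` D = D" unfolding image_image using rk_en[OF Bfin[OF True]] by (simp add: subset_iff)
    qed
    finally show ?thesis by simp
  qed
qed

lemma Tm_order:
  assumes s: "s \<in> set_partitions n" "refines s p" and s': "s' \<in> set_partitions n" "refines s' p"
  shows "(\<forall>B\<in>p. refines (Tm p s B) (Tm p s' B)) \<longleftrightarrow> refines s s'"
proof
  assume r: "refines s s'"
  show "\<forall>B\<in>p. refines (Tm p s B) (Tm p s' B)"
  proof (intro ballI)
    fix B assume B: "B \<in> p"
    show "refines (Tm p s B) (Tm p s' B)" unfolding refines_def Tm_B[OF s B] Tm_B[OF s' B]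
    proof
      fix D assume "D \<in> (\<lambda>C. rk B ` C) ` {C\<in>s. C \<subseteq> B}"
      then obtain C where C: "C \<in> s" "C \<subseteq> B" "D = rk B ` C" by blast
      obtain C' where C': "C' \<in> s'" "C \<subseteq> C'" using r C(1) unfolding refines_def by blast
      obtain B' where B': "B' \<in> p" "C' \<subseteq> B'" using sub_block[OF s' C'(1)] by blast
      have "B' = B" using sub_block_uniq[OF s(1) C(1) B'(1) _ B C(2)] C' B' by blast
      then have "rk B ` C' \<in> (\<lambda>C. rk B ` C) ` {C\<in>s'. C \<subseteq> B}" using C' B' by blast
      moreover have "D \<subseteq> rk B ` C'" using C C' by blast
      ultimately show "\<exists>D'\<in>(\<lambda>C. rk B ` C) ` {C\<in>s'. C \<subseteq> B}. D \<subseteq> D'" by blast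
    qed
  qed
next
  assume r: "\<forall>B\<in>p. refines (Tm p s B) (Tm p s' B)"
  show "refines s s'" unfolding refines_def
  proof
    fix C assume C: "C \<in> s"
    obtain B where B: "B \<in> p" "C \<subseteq> B" using sub_block[OF s C] by blast
    have "rk B ` C \<in> Tm p s B" unfolding Tm_B[OF s B(1)] using C B by blast
    then obtain D' where D': "D' \<in> Tm p s' B" "rk B ` C \<subseteq> D'" using r B(1) unfolding refines_def by blast
    then obtain C' where C': "C' \<in> s'" "C' \<subseteq> B" "D' = rk B ` C'" unfolding Tm_B[OF s' B(1)] by blast
    have "C \<subseteq> C'"
    proof
      fix c assume c: "c \<in> C"
      then have "rk B c \<in> rk B ` C'" using D' C' by blast
      then obtain c' where "c' \<in> C'" "rk B c = rk B c'" by blast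
      moreover have "c \<in> B" using c B by blast
      ultimately have "c = c'" using inj_onD[OF rk_inj[OF Bfin[OF B(1)]]] C'(2) by blast
      then show "c \<in> C'" using \<open>c' \<in> C'\<close> by simp
    qed
    then show "\<exists>C'\<in>s'. C \<subseteq> C'" using C' by blast
  qed
qed

lemma Tm_bij:
  "bij_betw (Tm p) {s\<in>set_partitions n. refines s p} (PiE p (\<lambda>B. set_partitions (card B)))"
proof (rule bij_betw_byWitness[where f'="Um p"])
  show "\<forall>a\<in>{s \<in> set_partitions n. refines s p}. Um p (Tm p a) = a" using Um_Tm by blast
  show "\<forall>a'\<in>PiE p (\<lambda>B. set_partitions (card B)). Tm p (Um p a') = a'" using Tm_Um by blast
  show "Tm p ` {s \<in> set_partitions n. refines s p} \<subseteq> PiE p (\<lambda>B. set_partitions (card B))"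
    using Tm_PiE by blast
  show "Um p ` PiE p (\<lambda>B. set_partitions (card B)) \<subseteq> {s \<in> set_partitions n. refines s p}"
    using Um_part by blast
qed

lemma Tm_top: "B \<in> p \<Longrightarrow> Tm p p B = {{1..card B}}"
proof -
  assume B: "B \<in> p"
  have r: "refines p p" unfolding refines_def by blast
  have "{C\<in>p. C \<subseteq> B} = {B}"
  proof (intro equalityI subsetI)
    fix C assume "C \<in> {C\<in>p. C \<subseteq> B}"
    then show "C \<in> {B}" using sub_block_uniq[OF p, of C C B] B by blast
  qed (use B in auto)
  then show ?thesis unfolding Tm_B[OF p r B] using rk_image[OF Bfin[OF B]] by simp
qed

lemma moebius_split:
  assumes s: "s \<in> set_partitions n" "refines s p"
  shows "moebius (set_partitions n) refines s p
         = (\<Prod>B\<in>p. moebius (set_partitions (card B)) refines (Tm p s B) {{1..card B}})"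
proof -
  define T0 where "T0 = {s\<in>set_partitions n. refines s p}"
  have rp: "refines p p" unfolding refines_def by blast
  have sT: "s \<in> T0" "p \<in> T0" using s p rp unfolding T0_def by auto
  have "moebius T0 refines s p = moebius (set_partitions n) refines s p"
  proof (rule moebius_sub[OF sp_fin sp_porder])
    show "T0 \<subseteq> set_partitions n" unfolding T0_def by blast
    fix x y z assume xyz: "x \<in> T0" "y \<in> T0" "z \<in> set_partitions n" "refines x z" "refines z y"
    have "refines z p" unfolding refines_def
    proof
      fix B assume "B \<in> z"
      then obtain C where C: "C \<in> y" "B \<subseteq> C" using xyz(5) unfolding refines_def by blast
      then obtain D where D: "D \<in> p" "C \<subseteq> D" using xyz(2) unfolding T0_def refines_def by blast
      then show "\<exists>D\<in>p. B \<subseteq> D" using C by blast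
    qed
    then show "z \<in> T0" unfolding T0_def using xyz(3) by blast
  qed (use sT in auto)
  moreover have "moebius (PiE p (\<lambda>B. set_partitions (card B))) (\<lambda>x y. \<forall>B\<in>p. refines (x B) (y B)) (Tm p s) (Tm p p)
      = moebius T0 refines s p"
  proof (rule moebius_iso)
    show "finite T0" unfolding T0_def using sp_fin by simp
    show "porder T0 refines" by (rule porder_subset[OF sp_porder]) (auto simp: T0_def)
    show "bij_betw (Tm p) T0 (PiE p (\<lambda>B. set_partitions (card B)))" unfolding T0_def by (rule Tm_bij)
    fix x y assume "x \<in> T0" "y \<in> T0"
    then show "(\<forall>B\<in>p. refines (Tm p x B) (Tm p y B)) \<longleftrightarrow> refines x y" unfolding T0_def using Tm_order by blast
  qed (use sT in auto)
  moreover have "moebius (PiE p (\<lambda>B. set_partitions (card B))) (\<lambda>x y. \<forall>B\<in>p. refines (x B) (y B)) (Tm p s) (Tm p p)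
      = (\<Prod>B\<in>p. moebius (set_partitions (card B)) refines (Tm p s B) (Tm p p B))"
    by (rule moebius_prod[OF sp_fin_p[OF p] sp_fin sp_porder Tm_PiE[OF s] Tm_PiE[OF p rp]])
  moreover have "(\<Prod>B\<in>p. moebius (set_partitions (card B)) refines (Tm p s B) (Tm p p B))
      = (\<Prod>B\<in>p. moebius (set_partitions (card B)) refines (Tm p s B) {{1..card B}})"
    using Tm_top by (intro prod.cong) auto
  ultimately show ?thesis by simp
qed

end

lemma card_group:
  assumes "finite S" "finite T" "g ` S \<subseteq> T"
  shows "card S = (\<Sum>y\<in>T. card {x\<in>S. g x = y})"
proof -
  have "(\<Sum>y\<in>T. \<Sum>x\<in>{x\<in>S. g x = y}. (1::nat)) = (\<Sum>x\<in>S. (1::nat))"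
    by (rule sum.group[OF assms])
  then show ?thesis by simp
qed

lemma card_split_Int: "finite A \<Longrightarrow> card A = card (A - B) + card (A \<inter> B)"
proof -
  assume f: "finite A"
  have "A = (A - B) \<union> (A \<inter> B)" by blast
  then have "card A = card ((A - B) \<union> (A \<inter> B))" by simp
  also have "\<dots> = card (A - B) + card (A \<inter> B)" using f by (intro card_Un_disjoint) auto
  finally show ?thesis .
qed

lemma pow_parity: "even (a + b) \<Longrightarrow> (-1::'b::ring_1) ^ a = (-1) ^ b"
  by (cases "even a") (auto simp: neg_one_even_power neg_one_odd_power)

lemma even_classes:
  fixes ms :: "nat \<Rightarrow> nat"
  assumes fin: "finite I" and F: "F \<subseteq> I"
    and cl: "\<And>j j'. j \<in> F \<Longrightarrow> j' \<in> I \<Longrightarrow> ms j' = ms j \<Longrightarrow> j' \<in> F"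
    and ev: "\<And>i. i \<in> I \<Longrightarrow> even (card {j\<in>I. ms j = ms i})"
  shows "even (card F)"
proof -
  have finF: "finite F" using F fin by (rule finite_subset)
  have "card F = (\<Sum>c\<in>ms ` F. card {j\<in>F. ms j = c})"
    by (rule card_group[OF finF]) (use finF in auto)
  moreover have "even (card {j\<in>F. ms j = c})" if c: "c \<in> ms ` F" for c
  proof -
    obtain j0 where j0: "j0 \<in> F" "c = ms j0" using c by blast
    have "{j\<in>F. ms j = c} = {j\<in>I. ms j = ms j0}"
      using cl[OF j0(1)] F j0 by blast
    then show ?thesis using ev[of j0] j0 F by auto
  qed
  ultimately show ?thesis by (simp add: dvd_sum)
qed

lemma cross_parity:
  fixes I :: "nat set" and ms mp :: "nat \<Rightarrow> nat"
  assumes fin: "finite I"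
    and ref: "\<And>i j. i \<in> I \<Longrightarrow> j \<in> I \<Longrightarrow> ms i = ms j \<Longrightarrow> mp i = mp j"
    and ev: "\<And>i. i \<in> I \<Longrightarrow> even (card {j\<in>I. ms j = ms i})"
  shows "even (card {(i,j). i \<in> I \<and> j \<in> I \<and> mp i \<noteq> mp j \<and> i < j \<and> ms j < ms i}
             + card {(i,j). i \<in> I \<and> j \<in> I \<and> i < j \<and> mp j < mp i})"
proof -
  define Dp where "Dp = (\<lambda>i j. i \<in> I \<and> j \<in> I \<and> mp i \<noteq> mp j \<and> (ms j < ms i \<longleftrightarrow> \<not> mp j < mp i))"
  define P where "P = {(i,j). i \<in> I \<and> j \<in> I \<and> mp i \<noteq> mp j \<and> i < j \<and> ms j < ms i}"
  define Q where "Q = {(i,j). i \<in> I \<and> j \<in> I \<and> i < j \<and> mp j < mp i}"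
  define D1 where "D1 = {(i,j). Dp i j \<and> i < j}"
  define D2 where "D2 = {(i,j). Dp i j \<and> ms i < ms j}"
  have finII: "finite (I \<times> I)" using fin by simp
  have finP: "finite P" by (rule finite_subset[OF _ finII]) (auto simp: P_def)
  have finQ: "finite Q" by (rule finite_subset[OF _ finII]) (auto simp: Q_def)
  have finD1: "finite D1" by (rule finite_subset[OF _ finII]) (auto simp: D1_def Dp_def)
  have finD2: "finite D2" by (rule finite_subset[OF _ finII]) (auto simp: D2_def Dp_def)
  have msne: "ms i \<noteq> ms j" if "Dp i j" for i j using that ref unfolding Dp_def by blast
  have Dsym: "Dp j i" if "Dp i j" for i j
  proof -
    have "ms i \<noteq> ms j" using msne[OF that] .
    then show ?thesis using that unfolding Dp_def by auto
  qed
  have "D1 = (P - Q) \<union> (Q - P)" unfolding D1_def P_def Q_def Dp_def by auto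
  moreover have "(P - Q) \<inter> (Q - P) = {}" by blast
  ultimately have cD1: "card D1 = card (P - Q) + card (Q - P)"
    using finP finQ by (simp add: card_Un_disjoint)
  have s1: "card P + card Q = card D1 + 2 * card (P \<inter> Q)"
    using card_split_Int[OF finP, of Q] card_split_Int[OF finQ, of P] cD1 by (simp add: Int_commute)
  have sw: "D2 - D1 = (\<lambda>(i,j). (j,i)) ` (D1 - D2)"
  proof (intro equalityI subsetI)
    fix x assume x: "x \<in> D2 - D1"
    obtain i j where ij: "x = (i,j)" by (cases x)
    have d: "Dp i j" "ms i < ms j" "\<not> i < j" using x ij unfolding D1_def D2_def by auto
    have "i \<noteq> j" using msne[OF d(1)] by auto
    then have "(j,i) \<in> D1 - D2" using Dsym[OF d(1)] d unfolding D1_def D2_def by auto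
    then show "x \<in> (\<lambda>(i,j). (j,i)) ` (D1 - D2)" using ij by force
  next
    fix x assume "x \<in> (\<lambda>(i,j). (j,i)) ` (D1 - D2)"
    then obtain i j where ij: "x = (j,i)" "(i,j) \<in> D1 - D2" by auto
    have d: "Dp i j" "i < j" "\<not> ms i < ms j" using ij unfolding D1_def D2_def by auto
    have "ms j < ms i" using msne[OF d(1)] d(3) by auto
    then show "x \<in> D2 - D1" using Dsym[OF d(1)] d ij unfolding D1_def D2_def by auto
  qed
  have "card (D2 - D1) = card (D1 - D2)"
    unfolding sw by (rule card_image) (auto simp: inj_on_def)
  then have s2: "card D1 + card D2 = 2 * (card (D1 - D2) + card (D1 \<inter> D2))"
    using card_split_Int[OF finD1, of D2] card_split_Int[OF finD2, of D1] by (simp add: Int_commute)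
  define F where "F = (\<lambda>i. {j\<in>I. Dp i j \<and> ms i < ms j})"
  have D2S: "D2 = Sigma I F" unfolding D2_def F_def Dp_def by auto
  have "card D2 = (\<Sum>i\<in>I. card (F i))"
    unfolding D2S using fin by (intro card_SigmaI) (auto simp: F_def)
  moreover have "even (card (F i))" if i: "i \<in> I" for i
  proof (rule even_classes[OF fin _ _ ev])
    show "F i \<subseteq> I" unfolding F_def by blast
    fix j j' assume j: "j \<in> F i" "j' \<in> I" "ms j' = ms j"
    have "j \<in> I" using j unfolding F_def by blast
    then have "mp j' = mp j" using ref[OF j(2)] j(3) by blast
    then show "j' \<in> F i" using j unfolding F_def Dp_def by auto
  qed
  ultimately have "even (card D2)" by (simp add: dvd_sum)
  then have "even (card D1)" using s2 by presburger
  then show ?thesis using s1 unfolding P_def Q_def by presburger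
qed

definition mb :: "nat set set \<Rightarrow> nat \<Rightarrow> nat" where
  "mb s j = Min (block_of s j)"

definition invc :: "nat \<Rightarrow> (nat \<Rightarrow> nat) \<Rightarrow> nat" where
  "invc n f = card {(i,j). i \<in> {1..n} \<and> j \<in> {1..n} \<and> i < j \<and> f j < f i}"

lemma c0_term:
  assumes fA: "finite A" and fB: "finite B" and disj: "A \<inter> B = {}" and evB: "even (card B)"
  shows "even (c0_pair A B + card {(i,j). i \<in> B \<and> j \<in> A \<and> i < j})"
proof -
  define X1 where "X1 = {(i,j). i \<in> B \<and> j \<in> A \<and> i < j}"
  define X2 where "X2 = {(a,b). a \<in> A \<and> b \<in> B \<and> Min B < a \<and> a < b}"
  define Y where "Y = (\<lambda>(i,j). (j,i)) ` X1"
  have cY: "card Y = card X1" unfolding Y_def by (rule card_image) (auto simp: inj_on_def)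
  have Yeq: "Y = {(a,b). a \<in> A \<and> b \<in> B \<and> b < a}" unfolding Y_def X1_def by auto
  have un: "Y \<union> X2 = {a\<in>A. Min B < a} \<times> B"
  proof (intro equalityI subsetI)
    fix x assume "x \<in> Y \<union> X2"
    then show "x \<in> {a\<in>A. Min B < a} \<times> B"
    proof
      assume "x \<in> Y"
      then obtain a b where "x = (a,b)" "a \<in> A" "b \<in> B" "b < a" unfolding Yeq by blast
      moreover have "Min B \<le> b" using Min_le[OF fB \<open>b \<in> B\<close>] .
      ultimately show ?thesis by auto
    next
      assume "x \<in> X2" then show ?thesis unfolding X2_def by auto
    qed
  next
    fix x assume "x \<in> {a\<in>A. Min B < a} \<times> B"
    then obtain a b where ab: "x = (a,b)" "a \<in> A" "b \<in> B" "Min B < a" by blast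
    have "a \<noteq> b" using disj ab by blast
    then have "b < a \<or> a < b" by auto
    then show "x \<in> Y \<union> X2" using ab unfolding Yeq X2_def by auto
  qed
  have int: "Y \<inter> X2 = {}" unfolding Yeq X2_def by auto
  have finY: "finite Y" by (rule finite_subset[of _ "A \<times> B"]) (use fA fB in \<open>auto simp: Yeq\<close>)
  have finX2: "finite X2" by (rule finite_subset[of _ "A \<times> B"]) (use fA fB in \<open>auto simp: X2_def\<close>)
  have "card Y + card X2 = card ({a\<in>A. Min B < a} \<times> B)"
    unfolding un[symmetric] using finY finX2 int by (simp add: card_Un_disjoint)
  also have "\<dots> = card {a\<in>A. Min B < a} * card B" by (rule card_cartesian_product)
  finally have e: "card X1 + card X2 = card {a\<in>A. Min B < a} * card B" using cY by simp
  have "even (card {a\<in>A. Min B < a} * card B)" using evB by simp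
  then have "even (card X1 + card X2)" unfolding e .
  then have "even (card X2 + card X1)" by (simp only: add.commute)
  then show ?thesis unfolding c0_pair_def X1_def[symmetric] X2_def[symmetric] .
qed

lemma c0_invc:
  assumes p: "p \<in> set_partitions n" and ev: "\<And>B. B \<in> p \<Longrightarrow> even (card B)"
  shows "even (c0 p + invc n (mb p))"
proof -
  have pp: "partition_on {1..n} p" by (rule sp_part[OF p])
  define Idx where "Idx = {(A,B). A \<in> p \<and> B \<in> p \<and> Min A < Min B}"
  define Pairs where "Pairs = {(i,j). i \<in> {1..n} \<and> j \<in> {1..n} \<and> i < j \<and> mb p j < mb p i}"
  define g where "g = (\<lambda>(i::nat,j::nat). (block_of p j, block_of p i))"
  have finIdx: "finite Idx" by (rule finite_subset[of _ "p \<times> p"]) (use sp_fin_p[OF p] in \<open>auto simp: Idx_def\<close>)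
  have finPairs: "finite Pairs" by (rule finite_subset[of _ "{1..n} \<times> {1..n}"]) (auto simp: Pairs_def)
  have gP: "g ` Pairs \<subseteq> Idx"
  proof
    fix y assume "y \<in> g ` Pairs"
    then obtain i j where ij: "y = (block_of p j, block_of p i)" "i \<in> {1..n}" "j \<in> {1..n}" "mb p j < mb p i"
      unfolding g_def Pairs_def by auto
    then show "y \<in> Idx" unfolding Idx_def mb_def using block_of_mem[OF pp] by auto
  qed
  have fib: "{x\<in>Pairs. g x = AB} = {(i,j). i \<in> snd AB \<and> j \<in> fst AB \<and> i < j}" if AB: "AB \<in> Idx" for AB
  proof -
    obtain A B where AB': "AB = (A,B)" "A \<in> p" "B \<in> p" "Min A < Min B" using AB unfolding Idx_def by auto
    show ?thesis
    proof (intro equalityI subsetI)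
      fix x assume "x \<in> {x\<in>Pairs. g x = AB}"
      then obtain i j where ij: "x = (i,j)" "i \<in> {1..n}" "j \<in> {1..n}" "i < j"
        "block_of p j = A" "block_of p i = B" unfolding Pairs_def g_def AB' by auto
      then show "x \<in> {(i,j). i \<in> snd AB \<and> j \<in> fst AB \<and> i < j}" using block_of_mem[OF pp] AB' by fastforce
    next
      fix x assume "x \<in> {(i,j). i \<in> snd AB \<and> j \<in> fst AB \<and> i < j}"
      then obtain i j where ij: "x = (i,j)" "i \<in> B" "j \<in> A" "i < j" using AB' by auto
      have bo: "block_of p i = B" "block_of p j = A" using block_of_eq[OF pp] ij AB' by auto
      have "i \<in> {1..n}" "j \<in> {1..n}" using part_sub[OF pp] ij AB' by blast+
      then show "x \<in> {x\<in>Pairs. g x = AB}" using bo ij AB' unfolding Pairs_def g_def mb_def by auto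
    qed
  qed
  have "invc n (mb p) = (\<Sum>AB\<in>Idx. card {x\<in>Pairs. g x = AB})"
    unfolding invc_def Pairs_def[symmetric] by (rule card_group[OF finPairs finIdx gP])
  also have "\<dots> = (\<Sum>AB\<in>Idx. card {(i,j). i \<in> snd AB \<and> j \<in> fst AB \<and> i < j})"
    using fib by (intro sum.cong) auto
  finally have inv: "invc n (mb p) = (\<Sum>AB\<in>Idx. card {(i,j). i \<in> snd AB \<and> j \<in> fst AB \<and> i < j})" .
  have c0e: "c0 p = (\<Sum>AB\<in>Idx. c0_pair (fst AB) (snd AB))"
    unfolding c0_def Idx_def by (intro sum.cong) auto
  have "c0 p + invc n (mb p) = (\<Sum>AB\<in>Idx. c0_pair (fst AB) (snd AB) + card {(i,j). i \<in> snd AB \<and> j \<in> fst AB \<and> i < j})"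
    unfolding inv c0e sum.distrib ..
  moreover have "even (c0_pair (fst AB) (snd AB) + card {(i,j). i \<in> snd AB \<and> j \<in> fst AB \<and> i < j})"
    if AB: "AB \<in> Idx" for AB
  proof -
    obtain A B where AB': "AB = (A,B)" "A \<in> p" "B \<in> p" "Min A < Min B" using AB unfolding Idx_def by auto
    have "A \<noteq> B" using AB' by auto
    then have "A \<inter> B = {}" using partition_onD2[OF pp] AB' unfolding disjoint_def by blast
    then show ?thesis using c0_term[OF sp_block_fin[OF p AB'(2)] sp_block_fin[OF p AB'(3)] _ ev[OF AB'(3)]] AB' by simp
  qed
  ultimately show ?thesis by (simp add: dvd_sum)
qed

lemma mb_mem:
  assumes s: "s \<in> set_partitions n" and i: "i \<in> {1..n}"
  shows "mb s i \<in> block_of s i"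
proof -
  have "block_of s i \<in> s" using block_of_mem[OF sp_part[OF s] i] by blast
  then have "finite (block_of s i)" "block_of s i \<noteq> {}"
    using sp_block_fin[OF s] part_ne[OF sp_part[OF s]] by auto
  then show ?thesis unfolding mb_def by (rule Min_in)
qed

lemma mb_eq_iff:
  assumes s: "s \<in> set_partitions n" and i: "i \<in> {1..n}" and j: "j \<in> {1..n}"
  shows "mb s j = mb s i \<longleftrightarrow> block_of s j = block_of s i"
proof
  assume e: "mb s j = mb s i"
  have "mb s i \<in> block_of s j" using mb_mem[OF s j] e by simp
  moreover have "mb s i \<in> block_of s i" using mb_mem[OF s i] .
  ultimately show "block_of s j = block_of s i"
    using part_disj[OF sp_part[OF s]] block_of_mem[OF sp_part[OF s] i] block_of_mem[OF sp_part[OF s] j] by blast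
qed (simp add: mb_def)

lemma mb_class:
  assumes s: "s \<in> set_partitions n" and i: "i \<in> {1..n}"
  shows "{j\<in>{1..n}. mb s j = mb s i} = block_of s i"
proof (intro equalityI subsetI)
  fix j assume j: "j \<in> {j\<in>{1..n}. mb s j = mb s i}"
  then have j1: "j \<in> {1..n}" by simp
  have "block_of s j = block_of s i" using mb_eq_iff[OF s i j1] j by simp
  moreover have "j \<in> block_of s j" using block_of_mem[OF sp_part[OF s] j1] by simp
  ultimately show "j \<in> block_of s i" by simp
next
  fix j assume j: "j \<in> block_of s i"
  have bi: "block_of s i \<in> s" using block_of_mem[OF sp_part[OF s] i] by blast
  then have "j \<in> {1..n}" using part_sub[OF sp_part[OF s]] j by blast
  moreover have "block_of s j = block_of s i" using block_of_eq[OF sp_part[OF s] bi j] .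
  ultimately show "j \<in> {j\<in>{1..n}. mb s j = mb s i}" unfolding mb_def by simp
qed

lemma par_comb:
  fixes a x y z w b S T :: nat
  assumes "even (a + x)" "x = y + z" "even (z + w)" "even (b + w)" "y = S" "even (S + T)"
  shows "even (a + (b + T))"
  using assms by presburger

context
  fixes n :: nat and p :: "nat set set"
  assumes p: "p \<in> set_partitions n"
begin

lemma block_in_B:
  assumes s: "s \<in> set_partitions n" "refines s p" and B: "B \<in> p" and i: "i \<in> B"
  shows "block_of s i \<subseteq> B"
proof -
  have i': "i \<in> {1..n}" using part_sub[OF pp[OF p] B] i by blast
  have bi: "block_of s i \<in> s" "i \<in> block_of s i" using block_of_mem[OF sp_part[OF s(1)] i'] by auto
  obtain B' where B': "B' \<in> p" "block_of s i \<subseteq> B'" using sub_block[OF p s bi(1)] by blast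
  have "B' = B" using part_disj[OF pp[OF p] B'(1) B] B'(2) bi(2) i by blast
  then show ?thesis using B' by simp
qed

lemma mb_Tm:
  assumes s: "s \<in> set_partitions n" "refines s p" and B: "B \<in> p" and i: "i \<in> B"
  shows "mb (Tm p s B) (rk B i) = rk B (mb s i) \<and> mb s i \<in> B"
proof -
  have fB: "finite B" using Bfin[OF p B] .
  have i': "i \<in> {1..n}" using part_sub[OF pp[OF p] B] i by blast
  have bi: "block_of s i \<in> s" "i \<in> block_of s i" using block_of_mem[OF sp_part[OF s(1)] i'] by auto
  have sub: "block_of s i \<subseteq> B" by (rule block_in_B[OF s B i])
  have m1: "rk B ` block_of s i \<in> Tm p s B" unfolding Tm_B[OF p s B] using bi sub by blast
  have m2: "rk B i \<in> rk B ` block_of s i" using bi by blast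
  have pt: "partition_on {1..card B} (Tm p s B)" using Tm_part[OF p s B] unfolding set_partitions_def by simp
  have bo: "block_of (Tm p s B) (rk B i) = rk B ` block_of s i" by (rule block_of_eq[OF pt m1 m2])
  have mono: "mono (rk B)"
  proof (rule monoI)
    fix x y :: nat assume "x \<le> y"
    then have "{b\<in>B. b < x} \<subseteq> {b\<in>B. b < y}" by auto
    then have "card {b\<in>B. b < x} \<le> card {b\<in>B. b < y}" by (rule card_mono[rotated]) (use fB in simp)
    then show "rk B x \<le> rk B y" unfolding rk_def by simp
  qed
  have fn: "finite (block_of s i)" "block_of s i \<noteq> {}" using sp_block_fin[OF s(1) bi(1)] bi(2) by auto
  have "mb (Tm p s B) (rk B i) = rk B (mb s i)"
    unfolding mb_def bo using mono_Min_commute[OF mono fn] by simp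
  moreover have "mb s i \<in> B" using mb_mem[OF s(1) i'] sub by blast
  ultimately show ?thesis by simp
qed

lemma invc_Tm:
  assumes s: "s \<in> set_partitions n" "refines s p" and B: "B \<in> p"
  shows "card {(i,j). i \<in> B \<and> j \<in> B \<and> i < j \<and> mb s j < mb s i} = invc (card B) (mb (Tm p s B))"
proof -
  have fB: "finite B" using Bfin[OF p B] .
  define h where "h = (\<lambda>(i,j). (rk B i, rk B j))"
  have inj: "inj_on h (B \<times> B)" unfolding h_def inj_on_def using inj_onD[OF rk_inj[OF fB]] by auto
  have img: "h ` {(i,j). i \<in> B \<and> j \<in> B \<and> i < j \<and> mb s j < mb s i}
      = {(i,j). i \<in> {1..card B} \<and> j \<in> {1..card B} \<and> i < j \<and> mb (Tm p s B) j < mb (Tm p s B) i}"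
  proof (intro equalityI subsetI)
    fix x assume "x \<in> h ` {(i,j). i \<in> B \<and> j \<in> B \<and> i < j \<and> mb s j < mb s i}"
    then obtain i j where ij: "x = (rk B i, rk B j)" "i \<in> B" "j \<in> B" "i < j" "mb s j < mb s i"
      unfolding h_def by auto
    have "rk B (mb s j) < rk B (mb s i)" using rk_mono[OF fB] mb_Tm[OF s B] ij by blast
    then show "x \<in> {(i,j). i \<in> {1..card B} \<and> j \<in> {1..card B} \<and> i < j \<and> mb (Tm p s B) j < mb (Tm p s B) i}"
      using ij rk_range[OF fB] rk_mono[OF fB] mb_Tm[OF s B] by auto
  next
    fix x assume "x \<in> {(i,j). i \<in> {1..card B} \<and> j \<in> {1..card B} \<and> i < j \<and> mb (Tm p s B) j < mb (Tm p s B) i}"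
    then obtain t u where tu: "x = (t,u)" "t \<in> {1..card B}" "u \<in> {1..card B}" "t < u"
      "mb (Tm p s B) u < mb (Tm p s B) t" by auto
    define i where "i = en B t"
    define j where "j = en B u"
    have ij: "i \<in> B" "j \<in> B" "rk B i = t" "rk B j = u" using rk_en[OF fB] tu unfolding i_def j_def by auto
    have "i < j" using rk_mono_iff[OF fB ij(1,2)] ij tu by simp
    moreover have "rk B (mb s j) < rk B (mb s i)" using mb_Tm[OF s B] ij tu by metis
    then have "mb s j < mb s i" using rk_mono_iff[OF fB] mb_Tm[OF s B] ij by blast
    ultimately show "x \<in> h ` {(i,j). i \<in> B \<and> j \<in> B \<and> i < j \<and> mb s j < mb s i}"
      unfolding h_def using ij tu by (auto intro!: image_eqI[where x="(i,j)"])
  qed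
  have "card {(i,j). i \<in> B \<and> j \<in> B \<and> i < j \<and> mb s j < mb s i}
      = card (h ` {(i,j). i \<in> B \<and> j \<in> B \<and> i < j \<and> mb s j < mb s i})"
    by (rule card_image[symmetric]) (rule inj_on_subset[OF inj], auto)
  then show ?thesis unfolding img invc_def .
qed

lemma sign_split:
  assumes s: "s \<in> set_partitions n" "refines s p" and ev: "\<And>C. C \<in> s \<Longrightarrow> even (card C)"
  shows "(-1::complex) ^ c0 s = (-1) ^ c0 p * (\<Prod>B\<in>p. (-1) ^ c0 (Tm p s B))"
proof -
  have ss: "partition_on {1..n} s" by (rule sp_part[OF s(1)])
  have ps: "partition_on {1..n} p" by (rule pp[OF p])
  have evs: "even (card {j\<in>{1..n}. mb s j = mb s i})" if i: "i \<in> {1..n}" for i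
    unfolding mb_class[OF s(1) i] using ev[OF conjunct1[OF block_of_mem[OF ss i]]] .
  have refm: "mb p i = mb p j" if ij: "i \<in> {1..n}" "j \<in> {1..n}" "mb s i = mb s j" for i j
  proof -
    have "block_of s i = block_of s j" using mb_eq_iff[OF s(1) ij(2,1)] ij(3) by simp
    moreover obtain B where B: "B \<in> p" "i \<in> B" using part_cover[OF ps ij(1)] by blast
    moreover have "j \<in> block_of s j" using block_of_mem[OF ss ij(2)] by blast
    ultimately have "j \<in> B" using block_in_B[OF s B] by blast
    then have "block_of p i = block_of p j" using block_of_eq[OF ps B(1)] B by simp
    then show ?thesis unfolding mb_def by simp
  qed
  have evp: "even (card B)" if B: "B \<in> p" for B
  proof (rule even_classes[of "{1..n}" B "mb s"])
    show "B \<subseteq> {1..n}" by (rule part_sub[OF ps B])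
    fix j j' assume j: "j \<in> B" "j' \<in> {1..n}" "mb s j' = mb s j"
    have j1: "j \<in> {1..n}" using part_sub[OF ps B] j by blast
    have "block_of s j' = block_of s j" using mb_eq_iff[OF s(1) j1 j(2)] j(3) by simp
    moreover have "j' \<in> block_of s j'" using block_of_mem[OF ss j(2)] by blast
    ultimately show "j' \<in> B" using block_in_B[OF s B j(1)] by blast
  qed (use evs in auto)
  have e1: "even (c0 s + invc n (mb s))" by (rule c0_invc[OF s(1) ev])
  have e2: "even (c0 p + invc n (mb p))" by (rule c0_invc[OF p evp])
  have e3: "even (c0 (Tm p s B) + invc (card B) (mb (Tm p s B)))" if B: "B \<in> p" for B
  proof (rule c0_invc[OF Tm_part[OF p s B]])
    fix D assume "D \<in> Tm p s B"
    then obtain C where C: "C \<in> s" "C \<subseteq> B" "D = rk B ` C" unfolding Tm_B[OF p s B] by blast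
    have "card D = card C" using C card_image[OF inj_on_subset[OF rk_inj[OF Bfin[OF p B]] C(2)]] by simp
    then show "even (card D)" using ev[OF C(1)] by simp
  qed
  define SameP where "SameP = {(i,j). i \<in> {1..n} \<and> j \<in> {1..n} \<and> mb p i = mb p j \<and> i < j \<and> mb s j < mb s i}"
  define DiffP where "DiffP = {(i,j). i \<in> {1..n} \<and> j \<in> {1..n} \<and> mb p i \<noteq> mb p j \<and> i < j \<and> mb s j < mb s i}"
  have finSS: "finite ({1..n} \<times> {1..n})" by simp
  have finS: "finite SameP" by (rule finite_subset[OF _ finSS]) (auto simp: SameP_def)
  have finD: "finite DiffP" by (rule finite_subset[OF _ finSS]) (auto simp: DiffP_def)
  have "invc n (mb s) = card (SameP \<union> DiffP)"
    unfolding invc_def SameP_def DiffP_def by (rule arg_cong[where f=card]) auto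
  also have "\<dots> = card SameP + card DiffP"
    using finS finD by (intro card_Un_disjoint) (auto simp: SameP_def DiffP_def)
  finally have i1: "invc n (mb s) = card SameP + card DiffP" .
  have e4: "even (card DiffP + invc n (mb p))"
    unfolding DiffP_def invc_def by (rule cross_parity[OF finite_atLeastAtMost refm evs])
  have grp: "card SameP = (\<Sum>B\<in>p. card {x\<in>SameP. block_of p (fst x) = B})"
  proof (rule card_group[OF finS sp_fin_p[OF p]])
    show "(\<lambda>x. block_of p (fst x)) ` SameP \<subseteq> p"
    proof
      fix y assume "y \<in> (\<lambda>x. block_of p (fst x)) ` SameP"
      then obtain x where x: "x \<in> SameP" "y = block_of p (fst x)" by blast
      then have "fst x \<in> {1..n}" unfolding SameP_def by auto
      then show "y \<in> p" using block_of_mem[OF ps] x(2) by blast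
    qed
  qed
  have fibre: "{x\<in>SameP. block_of p (fst x) = B} = {(i,j). i \<in> B \<and> j \<in> B \<and> i < j \<and> mb s j < mb s i}"
    if B: "B \<in> p" for B
  proof (intro equalityI subsetI)
    fix x assume "x \<in> {x\<in>SameP. block_of p (fst x) = B}"
    then obtain i j where ij: "x = (i,j)" "i \<in> {1..n}" "j \<in> {1..n}" "mb p i = mb p j" "i < j"
      "mb s j < mb s i" "block_of p i = B" unfolding SameP_def by auto
    have "block_of p j = block_of p i" using mb_eq_iff[OF p ij(2,3)] ij(4) by simp
    then show "x \<in> {(i,j). i \<in> B \<and> j \<in> B \<and> i < j \<and> mb s j < mb s i}"
      using ij block_of_mem[OF ps ij(2)] block_of_mem[OF ps ij(3)] by auto
  next
    fix x assume "x \<in> {(i,j). i \<in> B \<and> j \<in> B \<and> i < j \<and> mb s j < mb s i}"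
    then obtain i j where ij: "x = (i,j)" "i \<in> B" "j \<in> B" "i < j" "mb s j < mb s i" by auto
    have bo: "block_of p i = B" "block_of p j = B" using block_of_eq[OF ps B] ij by auto
    have "i \<in> {1..n}" "j \<in> {1..n}" using part_sub[OF ps B] ij by blast+
    then show "x \<in> {x\<in>SameP. block_of p (fst x) = B}" using bo ij unfolding SameP_def mb_def by auto
  qed
  have i2: "card SameP = (\<Sum>B\<in>p. invc (card B) (mb (Tm p s B)))"
    unfolding grp using fibre invc_Tm[OF s] by (intro sum.cong) auto
  have e5: "even ((\<Sum>B\<in>p. invc (card B) (mb (Tm p s B))) + (\<Sum>B\<in>p. c0 (Tm p s B)))"
    unfolding sum.distrib[symmetric] using e3 by (simp add: dvd_sum add.commute)
  have "even (c0 s + (c0 p + (\<Sum>B\<in>p. c0 (Tm p s B))))"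
    using par_comb[OF e1 i1 e4 e2 i2 e5] .
  then have "(-1::complex) ^ c0 s = (-1) ^ (c0 p + (\<Sum>B\<in>p. c0 (Tm p s B)))" by (rule pow_parity)
  also have "\<dots> = (-1) ^ c0 p * (\<Prod>B\<in>p. (-1) ^ c0 (Tm p s B))" by (simp add: power_add power_sum)
  finally show ?thesis .
qed

end

context
  fixes sm :: "complex \<Rightarrow> 'a::ring_1 \<Rightarrow> 'a" and gam :: "'a \<Rightarrow> 'a" and phi :: "'a \<Rightarrow> complex"
  assumes G: "graded_ncps sm gam phi"
begin

lemma gam_add: "gam (x + y) = gam x + gam y" using G unfolding graded_ncps_def by blast
lemma gam_mult: "gam (x * y) = gam x * gam y" using G unfolding graded_ncps_def by blast
lemma gam_one: "gam 1 = 1" using G unfolding graded_ncps_def by blast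
lemma gam_nid: "gam \<noteq> id" using G unfolding graded_ncps_def by blast
lemma phi_add: "phi (x + y) = phi x + phi y" using G unfolding graded_ncps_def by blast
lemma phi_one: "phi 1 = 1" using G unfolding graded_ncps_def by blast
lemma phi_gam: "phi (gam x) = phi x" using G unfolding graded_ncps_def by blast
lemma sm_add: "sm a (x + y) = sm a x + sm a y" using G unfolding graded_ncps_def complex_algebra_def by simp
lemma sm_distr: "sm (a + b) x = sm a x + sm b x" using G unfolding graded_ncps_def complex_algebra_def by simp
lemma sm_one: "sm 1 x = x" using G unfolding graded_ncps_def complex_algebra_def by simp

lemma gam_zero: "gam 0 = 0"
  using gam_add[of 0 0] by simp

lemma gam_neg: "gam (- x) = - gam x"
  using gam_add[of x "- x"] gam_zero by (simp add: eq_neg_iff_add_eq_0 add.commute)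

lemma phi_zero: "phi 0 = 0"
  using phi_add[of 0 0] by simp

lemma phi_neg: "phi (- x) = - phi x"
  using phi_add[of x "- x"] phi_zero by (simp add: eq_neg_iff_add_eq_0 add.commute)

lemma sm_zero: "sm a 0 = 0"
  using sm_add[of a 0 0] by simp

lemma double_zero: "x + x = 0 \<Longrightarrow> x = (0::'a)"
proof -
  assume h: "x + x = 0"
  have "sm (1/2) (x + x) = sm (1/2) x + sm (1/2) x" by (rule sm_add)
  also have "\<dots> = sm (1/2 + 1/2) x" by (rule sm_distr[symmetric])
  also have "\<dots> = x" using sm_one by simp
  finally show ?thesis using h sm_zero by simp
qed

lemma one_nz: "(1::'a) \<noteq> 0"
proof
  assume h: "(1::'a) = 0"
  have "\<And>x::'a. x = 0" proof - fix x :: 'a have "x = x * 1" by simp then show "x = 0" using h by simp qed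
  then have "gam = id" by (intro ext) (metis id_apply)
  then show False using gam_nid by simp
qed

lemma odd_self: "gam x = - x \<Longrightarrow> gam x = x \<Longrightarrow> x = 0"
  using double_zero[of x] by (metis add.right_inverse)

lemma phi_odd: "gam x = - x \<Longrightarrow> phi x = 0"
proof -
  assume h: "gam x = - x"
  have "phi x = phi (- x)" using phi_gam[of x] h by simp
  then have "phi x = - phi x" using phi_neg by simp
  then show ?thesis by simp
qed

lemma odd_ne_one: "gam x = - x \<Longrightarrow> x \<noteq> 1"
proof
  assume h: "gam x = - x" "x = 1"
  then have "(1::'a) = - 1" using gam_one by simp
  then have "(1::'a) + 1 = 0" by (metis add.right_inverse)
  then show False using double_zero one_nz by blast
qed

lemma gam_prod_list:
  "(\<forall>x\<in>set xs. gam x = - x) \<Longrightarrow>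
   gam (prod_list xs) = (if even (length xs) then prod_list xs else - prod_list xs)"
proof (induction xs)
  case Nil then show ?case using gam_one by simp
next
  case (Cons x xs)
  then show ?case by (simp add: gam_mult)
qed

lemma gdeg_one: "gdeg gam 1 = 0" unfolding gdeg_def using gam_one by simp

lemma gdeg_prod_list:
  assumes "\<forall>x\<in>set xs. gam x = - x" and "prod_list xs \<noteq> 0"
  shows "gdeg gam (prod_list xs) = (if even (length xs) then 0 else 1)"
proof (cases "even (length xs)")
  case True then show ?thesis unfolding gdeg_def using gam_prod_list[OF assms(1)] by simp
next
  case False
  then have g: "gam (prod_list xs) = - prod_list xs" using gam_prod_list[OF assms(1)] by simp
  then have "gam (prod_list xs) \<noteq> prod_list xs" using odd_self[OF g] assms(2) by blast
  then show ?thesis unfolding gdeg_def using False by simp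
qed

end

lemma prod_list_zero_mem: "(0::'a::ring_1) \<in> set xs \<Longrightarrow> prod_list xs = 0"
  by (induction xs) auto

section \<open>Generic computation of the graded tensor product\<close>

definition slots :: "('a::ring_1 \<times> nat) list \<Rightarrow> nat \<Rightarrow> 'a" where
  "slots ys a = prod_list (map fst (filter (\<lambda>y. snd y = a) ys))"

definition cnt :: "('a::ring_1 \<Rightarrow> 'a) \<Rightarrow> ('a \<times> nat) list \<Rightarrow> nat" where
  "cnt gam ys = (\<Sum>j<length ys. if gdeg gam (fst (ys ! j)) = 1
       then card {a. snd (ys ! j) < a \<and> gdeg gam (slots (take j ys) a) = 1} else 0)"

lemma slots_snoc: "slots (ys @ [y]) a = slots ys a * (if snd y = a then fst y else 1)"
  unfolding slots_def by simp

lemma cnt_snoc: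
  "cnt gam (ys @ [y]) = cnt gam ys + (if gdeg gam (fst y) = 1
       then card {a. snd y < a \<and> gdeg gam (slots ys a) = 1} else 0)"
proof -
  have "cnt gam (ys @ [y]) = (\<Sum>j<Suc (length ys). if gdeg gam (fst ((ys @ [y]) ! j)) = 1
       then card {a. snd ((ys @ [y]) ! j) < a \<and> gdeg gam (slots (take j (ys @ [y])) a) = 1} else 0)"
    unfolding cnt_def by simp
  also have "\<dots> = (\<Sum>j<length ys. if gdeg gam (fst ((ys @ [y]) ! j)) = 1
       then card {a. snd ((ys @ [y]) ! j) < a \<and> gdeg gam (slots (take j (ys @ [y])) a) = 1} else 0)
     + (if gdeg gam (fst y) = 1 then card {a. snd y < a \<and> gdeg gam (slots ys a) = 1} else 0)"
    by (simp add: nth_append)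
  also have "(\<Sum>j<length ys. if gdeg gam (fst ((ys @ [y]) ! j)) = 1
       then card {a. snd ((ys @ [y]) ! j) < a \<and> gdeg gam (slots (take j (ys @ [y])) a) = 1} else 0)
      = cnt gam ys"
    unfolding cnt_def by (intro sum.cong) (auto simp: nth_append)
  finally show ?thesis .
qed

lemma gt_mult_copy:
  assumes g1: "gam 1 = 1"
  shows "gt_mult gam (c, f) (gt_copy x k) =
     (c * (-1) ^ (if gdeg gam x = 1 then card {a. k < a \<and> gdeg gam (f a) = 1} else 0),
      \<lambda>a. f a * (if k = a then x else 1))"
proof -
  have gd1: "gdeg gam 1 = 0" unfolding gdeg_def using g1 by simp
  have gdc: "gdeg gam (((\<lambda>_. 1)(k := x)) l) = 1 \<longleftrightarrow> l = k \<and> gdeg gam x = 1" for l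
    using gd1 by auto
  have set: "{(a, l). l < a \<and> gdeg gam (f a) = 1 \<and> gdeg gam (((\<lambda>_. 1)(k := x)) l) = 1}
     = (if gdeg gam x = 1 then (\<lambda>a. (a, k)) ` {a. k < a \<and> gdeg gam (f a) = 1} else {})"
    unfolding gdc by auto
  have card: "card {(a, l). l < a \<and> gdeg gam (f a) = 1 \<and> gdeg gam (((\<lambda>_. 1)(k := x)) l) = 1}
     = (if gdeg gam x = 1 then card {a. k < a \<and> gdeg gam (f a) = 1} else 0)"
    unfolding set by (auto intro!: card_image simp: inj_on_def)
  show ?thesis unfolding gt_mult_def gt_copy_def fst_conv snd_conv card
    by (auto intro!: ext)
qed

lemma gt_prod_gen:
  assumes g1: "gam 1 = 1"
  shows "gt_prod gam (map (\<lambda>y. gt_copy (fst y) (snd y)) ys) = ((-1) ^ cnt gam ys, slots ys)"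
proof (induction ys rule: rev_induct)
  case Nil
  show ?case unfolding gt_prod_def gt_one_def cnt_def slots_def by (auto intro!: ext)
next
  case (snoc y ys)
  have "gt_prod gam (map (\<lambda>y. gt_copy (fst y) (snd y)) (ys @ [y]))
      = gt_mult gam (gt_prod gam (map (\<lambda>y. gt_copy (fst y) (snd y)) ys)) (gt_copy (fst y) (snd y))"
    unfolding gt_prod_def by simp
  also have "\<dots> = gt_mult gam ((-1) ^ cnt gam ys, slots ys) (gt_copy (fst y) (snd y))"
    unfolding snoc ..
  also have "\<dots> = ((-1) ^ cnt gam (ys @ [y]), slots (ys @ [y]))"
    unfolding gt_mult_copy[of gam, OF g1] cnt_snoc power_add
    by (auto intro!: ext simp: slots_snoc)
  finally show ?case .
qed

lemma even_sum_odd_card: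
  fixes c :: "nat \<Rightarrow> nat"
  shows "finite A \<Longrightarrow> even ((\<Sum>a\<in>A. c a) + card {a\<in>A. odd (c a)})"
proof (induction A rule: finite_induct)
  case empty then show ?case by simp
next
  case (insert x A)
  have fin: "finite {a\<in>A. odd (c a)}" using insert(1) by simp
  have xn: "x \<notin> {a\<in>A. odd (c a)}" using insert(2) by simp
  have "card {a\<in>insert x A. odd (c a)} = (if odd (c x) then Suc (card {a\<in>A. odd (c a)}) else card {a\<in>A. odd (c a)})"
  proof (cases "odd (c x)")
    case True
    then have "{a\<in>insert x A. odd (c a)} = insert x {a\<in>A. odd (c a)}" by auto
    then show ?thesis using card_insert_disjoint[OF fin xn] True by simp
  next
    case False
    then have "{a\<in>insert x A. odd (c a)} = {a\<in>A. odd (c a)}" by auto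
    then show ?thesis using False by simp
  qed
  moreover have "(\<Sum>a\<in>insert x A. c a) = c x + (\<Sum>a\<in>A. c a)" using insert by simp
  ultimately show ?case using insert(3) by presburger
qed

definition pl :: "(nat \<Rightarrow> 'a::ring_1) \<Rightarrow> nat set \<Rightarrow> 'a" where
  "pl X B = prod_list (map X (sorted_list_of_set B))"

lemma filter_block:
  assumes p: "p \<in> set_partitions n" and B: "B \<in> p"
  shows "filter (\<lambda>j. mb p j = Min B) [1..<n+1] = sorted_list_of_set B"
proof (rule sorted_distinct_set_unique)
  show "sorted (filter (\<lambda>j. mb p j = Min B) [1..<n+1])" by (rule sorted_wrt_filter, rule sorted_upt)
  show "distinct (filter (\<lambda>j. mb p j = Min B) [1..<n+1])" by simp
  show "sorted (sorted_list_of_set B)" by simp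
  show "distinct (sorted_list_of_set B)" by simp
  have fB: "finite B" "B \<noteq> {}" using sp_block_fin[OF p B] part_ne[OF sp_part[OF p] B] by auto
  have mB: "Min B \<in> B" using Min_in[OF fB] .
  have mB1: "Min B \<in> {1..n}" using part_sub[OF sp_part[OF p] B] mB by blast
  have bo: "block_of p (Min B) = B" using block_of_eq[OF sp_part[OF p] B mB] .
  then have mbm: "mb p (Min B) = Min B" unfolding mb_def by simp
  have "set (filter (\<lambda>j. mb p j = Min B) [1..<n+1]) = {j\<in>{1..n}. mb p j = mb p (Min B)}"
    unfolding mbm by auto
  also have "\<dots> = B" using mb_class[OF p mB1] bo by simp
  finally show "set (filter (\<lambda>j. mb p j = Min B) [1..<n+1]) = set (sorted_list_of_set B)"
    using fB by simp
qed

lemma filter_nonmin: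
  assumes p: "p \<in> set_partitions n" and a: "a \<notin> Min ` p"
  shows "filter (\<lambda>j. mb p j = a) [1..<n+1] = []"
proof -
  have "mb p j \<noteq> a" if j: "j \<in> set [1..<n+1]" for j
  proof -
    have "j \<in> {1..n}" using j by auto
    then have "block_of p j \<in> p" using block_of_mem[OF sp_part[OF p]] by blast
    then show ?thesis using a unfolding mb_def by blast
  qed
  then show ?thesis by (simp add: filter_empty_conv)
qed

lemma sum_odd_term:
  fixes f :: "nat \<Rightarrow> nat" and I :: "nat set"
  assumes fin: "finite I"
  shows "even (card {a. v < a \<and> odd (card {i\<in>I. f i = a})} + card {i\<in>I. v < f i})"
proof -
  define A where "A = f ` {i\<in>I. v < f i}"
  have finA: "finite A" unfolding A_def using fin by simp
  have "card {i\<in>I. v < f i} = (\<Sum>a\<in>A. card {i\<in>{i\<in>I. v < f i}. f i = a})"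
    by (rule card_group) (use fin finA in \<open>simp_all add: A_def\<close>)
  also have "\<dots> = (\<Sum>a\<in>A. card {i\<in>I. f i = a})"
  proof (rule sum.cong[OF refl])
    fix a assume "a \<in> A"
    then have "v < a" unfolding A_def by auto
    then have "{i\<in>{i\<in>I. v < f i}. f i = a} = {i\<in>I. f i = a}" by auto
    then show "card {i\<in>{i\<in>I. v < f i}. f i = a} = card {i\<in>I. f i = a}" by simp
  qed
  finally have c1: "card {i\<in>I. v < f i} = (\<Sum>a\<in>A. card {i\<in>I. f i = a})" .
  have c2: "{a. v < a \<and> odd (card {i\<in>I. f i = a})} = {a\<in>A. odd (card {i\<in>I. f i = a})}"
  proof (intro equalityI subsetI)
    fix a assume a: "a \<in> {a. v < a \<and> odd (card {i\<in>I. f i = a})}"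
    then have "card {i\<in>I. f i = a} \<noteq> 0" by (intro notI) simp
    then have "{i\<in>I. f i = a} \<noteq> {}" by (intro notI) simp
    then obtain i where "i \<in> I" "f i = a" by blast
    then show "a \<in> {a\<in>A. odd (card {i\<in>I. f i = a})}" using a unfolding A_def by auto
  next
    fix a assume "a \<in> {a\<in>A. odd (card {i\<in>I. f i = a})}"
    then show "a \<in> {a. v < a \<and> odd (card {i\<in>I. f i = a})}" unfolding A_def by auto
  qed
  show ?thesis unfolding c1 c2 using even_sum_odd_card[OF finA, of "\<lambda>a. card {i\<in>I. f i = a}"]
    by (simp add: add.commute)
qed

lemma invc_sum:
  fixes f :: "nat \<Rightarrow> nat"
  shows "invc n f = (\<Sum>k<n. card {i\<in>{1..k}. f (Suc k) < f i})"
proof -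
  define S where "S = {(i,j). i \<in> {1..n} \<and> j \<in> {1..n} \<and> i < j \<and> f j < f i}"
  have finS: "finite S" by (rule finite_subset[of _ "{1..n} \<times> {1..n}"]) (auto simp: S_def)
  have "card S = (\<Sum>j\<in>{1..n}. card {x\<in>S. snd x = j})"
    by (rule card_group[OF finS]) (auto simp: S_def)
  also have "\<dots> = (\<Sum>j\<in>{1..n}. card {i\<in>{1..<j}. f j < f i})"
  proof (rule sum.cong[OF refl])
    fix j assume j: "j \<in> {1..n}"
    have "{x\<in>S. snd x = j} = (\<lambda>i. (i,j)) ` {i\<in>{1..<j}. f j < f i}" unfolding S_def using j by auto
    then show "card {x\<in>S. snd x = j} = card {i\<in>{1..<j}. f j < f i}"
      by (simp add: card_image inj_on_def)
  qed
  also have "\<dots> = (\<Sum>k<n. card {i\<in>{1..<Suc k}. f (Suc k) < f i})"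
    using sum.atLeast1_atMost_eq[of "\<lambda>j. card {i\<in>{1..<j}. f j < f i}" n] by simp
  also have "\<dots> = (\<Sum>k<n. card {i\<in>{1..k}. f (Suc k) < f i})"
    by (rule sum.cong[OF refl]) (simp add: atLeastLessThanSuc_atLeastAtMost)
  finally show ?thesis unfolding invc_def S_def .
qed

context
  fixes sm :: "complex \<Rightarrow> 'a::ring_1 \<Rightarrow> 'a" and gam :: "'a \<Rightarrow> 'a" and phi :: "'a \<Rightarrow> complex"
    and n :: nat and X :: "nat \<Rightarrow> 'a" and p :: "nat set set"
  assumes G: "graded_ncps sm gam phi"
    and odd: "\<forall>i\<in>{1..n}. gam (X i) = - X i"
    and p: "p \<in> set_partitions n"
begin

definition ys :: "('a \<times> nat) list" where
  "ys = map (\<lambda>j. (X j, mb p j)) [1..<n+1]"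

lemma pp1: "partition_on {1..n} p" by (rule sp_part[OF p])

lemma slots_ys: "slots ys a = prod_list (map X (filter (\<lambda>j. mb p j = a) [1..<n+1]))"
  unfolding slots_def ys_def by (simp add: filter_map o_def)

lemma slots_min: "B \<in> p \<Longrightarrow> slots ys (Min B) = pl X B"
  unfolding slots_ys pl_def using filter_block[OF p] by simp

lemma slots_nonmin: "a \<notin> Min ` p \<Longrightarrow> slots ys a = 1"
  unfolding slots_ys using filter_nonmin[OF p] by simp

lemma Min_inj: "inj_on Min p"
proof (rule inj_onI)
  fix A B assume AB: "A \<in> p" "B \<in> p" "Min A = Min B"
  have "Min A \<in> A" using Min_in sp_block_fin[OF p AB(1)] part_ne[OF pp1 AB(1)] by blast
  moreover have "Min B \<in> B" using Min_in sp_block_fin[OF p AB(2)] part_ne[OF pp1 AB(2)] by blast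
  ultimately show "A = B" using part_disj[OF pp1 AB(1,2)] AB(3) by simp
qed

lemma phi_part_eq: "phi_part gam phi n p X = (-1) ^ cnt gam ys * (\<Prod>B\<in>p. phi (pl X B))"
proof -
  have me: "map (\<lambda>j. gt_copy (X j) (Min (block_of p j))) [1..<n+1] = map (\<lambda>y. gt_copy (fst y) (snd y)) ys"
    unfolding ys_def mb_def map_map o_def by (simp only: fst_conv snd_conv)
  have "phi_part gam phi n p X = gt_state phi ((-1) ^ cnt gam ys, slots ys)"
    unfolding phi_part_def me gt_prod_gen[of gam, OF gam_one[OF G]] ..
  also have "\<dots> = (-1) ^ cnt gam ys * (\<Prod>k\<in>{k. slots ys k \<noteq> 1}. phi (slots ys k))"
    unfolding gt_state_def by simp
  also have "(\<Prod>k\<in>{k. slots ys k \<noteq> 1}. phi (slots ys k)) = (\<Prod>k\<in>Min ` p. phi (slots ys k))"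
  proof (rule prod.mono_neutral_left)
    show "finite (Min ` p)" using sp_fin_p[OF p] by simp
    show "{k. slots ys k \<noteq> 1} \<subseteq> Min ` p" using slots_nonmin by blast
    show "\<forall>i\<in>Min ` p - {k. slots ys k \<noteq> 1}. phi (slots ys i) = 1" using phi_one[OF G] by auto
  qed
  also have "\<dots> = (\<Prod>B\<in>p. phi (slots ys (Min B)))" by (rule prod.reindex[OF Min_inj, unfolded o_def])
  also have "\<dots> = (\<Prod>B\<in>p. phi (pl X B))" using slots_min by simp
  finally show ?thesis .
qed

lemma ys_len: "length ys = n" unfolding ys_def by simp

lemma ys_nth: "j < n \<Longrightarrow> ys ! j = (X (Suc j), mb p (Suc j))"
proof -
  assume j: "j < n"
  then have l: "j < length [1..<n+1]" by simp
  have "[1..<n+1] ! j = 1 + j" using j by (intro nth_upt) simp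
  then show ?thesis unfolding ys_def nth_map[OF l] by simp
qed

lemma ys_take: "j \<le> n \<Longrightarrow> take j ys = map (\<lambda>j. (X j, mb p j)) [1..<j+1]"
proof -
  assume j: "j \<le> n"
  have "take j [1..<n+1] = [1..<1+j]" using j by (intro take_upt) simp
  then show ?thesis unfolding ys_def take_map by simp
qed

lemma good_case:
  assumes nz: "\<And>B. B \<in> p \<Longrightarrow> phi (pl X B) \<noteq> 0"
  shows "(-1::complex) ^ cnt gam ys = (-1) ^ c0 p"
proof -
  have Xodd: "\<And>x. x \<in> X ` {1..n} \<Longrightarrow> gam x = - x" using odd by blast
  have evB: "even (card B)" and plnz: "pl X B \<noteq> 0" if B: "B \<in> p" for B
  proof -
    have fB: "finite B" using sp_block_fin[OF p B] .
    have sub: "B \<subseteq> {1..n}" using part_sub[OF pp1 B] .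
    have oddl: "\<forall>x\<in>set (map X (sorted_list_of_set B)). gam x = - x" using fB sub odd by auto
    show "pl X B \<noteq> 0" using nz[OF B] phi_zero[OF G] by auto
    show "even (card B)"
    proof (rule ccontr)
      assume "odd (card B)"
      then have "gam (pl X B) = - pl X B" unfolding pl_def using gam_prod_list[OF G oddl] fB by simp
      then show False using phi_odd[OF G] nz[OF B] by blast
    qed
  qed
  have Xnz: "X i \<noteq> 0" if i: "i \<in> {1..n}" for i
  proof
    assume X0: "X i = 0"
    have bi: "block_of p i \<in> p" "i \<in> block_of p i" using block_of_mem[OF pp1 i] by auto
    have "0 \<in> set (map X (sorted_list_of_set (block_of p i)))"
      using bi X0 sp_block_fin[OF p bi(1)] by force
    then have "pl X (block_of p i) = 0" unfolding pl_def by (rule prod_list_zero_mem)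
    then show False using plnz[OF bi(1)] by simp
  qed
  have gdX: "gdeg gam (X i) = 1" if i: "i \<in> {1..n}" for i
  proof -
    have "gam (X i) \<noteq> X i" using odd_self[OF G _ _] odd i Xnz[OF i] by blast
    then show ?thesis unfolding gdeg_def by simp
  qed
  have fullnz: "slots ys a \<noteq> 0" for a
  proof (cases "a \<in> Min ` p")
    case True then obtain B where "B \<in> p" "a = Min B" by blast
    then show ?thesis using slots_min plnz by simp
  next
    case False then show ?thesis using slots_nonmin one_nz[OF G] by simp
  qed
  have gdslot: "gdeg gam (slots (take j ys) a) = (if even (card {i\<in>{1..j}. mb p i = a}) then 0 else 1)"
    if j: "j \<le> n" for j a
  proof -
    define L where "L = filter (\<lambda>i. mb p i = a) [1..<j+1]"
    define R where "R = filter (\<lambda>i. mb p i = a) [j+1..<n+1]"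
    have st: "slots (take j ys) a = prod_list (map X L)"
      unfolding ys_take[OF j] slots_def L_def by (simp add: filter_map o_def)
    have "[1..<n+1] = [1..<j+1] @ [j+1..<n+1]" using j upt_add_eq_append[of 1 "j+1" "n-j"] by simp
    then have "slots ys a = prod_list (map X L) * prod_list (map X R)"
      unfolding slots_ys L_def R_def by simp
    then have nz: "prod_list (map X L) \<noteq> 0" using fullnz[of a] by auto
    have oddl: "\<forall>x\<in>set (map X L). gam x = - x" unfolding L_def using odd j by auto
    have "length (map X L) = card {i\<in>{1..j}. mb p i = a}"
    proof -
      have "length (map X L) = card ({i. mb p i = a} \<inter> set [1..<j+1])"
        unfolding L_def length_map by (rule distinct_length_filter) simp
      also have "{i. mb p i = a} \<inter> set [1..<j+1] = {i\<in>{1..j}. mb p i = a}" by auto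
      finally show ?thesis .
    qed
    then show ?thesis unfolding st using gdeg_prod_list[OF G oddl nz] by simp
  qed
  have cnt_eq: "cnt gam ys = (\<Sum>k<n. card {a. mb p (Suc k) < a \<and> odd (card {i\<in>{1..k}. mb p i = a})})"
    unfolding cnt_def ys_len
  proof (rule sum.cong[OF refl])
    fix k assume k: "k \<in> {..<n}"
    have k1: "Suc k \<in> {1..n}" using k by auto
    have kn: "k \<le> n" using k by simp
    have yk: "ys ! k = (X (Suc k), mb p (Suc k))" using ys_nth k by simp
    have se: "{a. snd (ys ! k) < a \<and> gdeg gam (slots (take k ys) a) = 1}
        = {a. mb p (Suc k) < a \<and> odd (card {i\<in>{1..k}. mb p i = a})}"
      unfolding yk using gdslot[OF kn] by auto
    show "(if gdeg gam (fst (ys ! k)) = 1 then card {a. snd (ys ! k) < a \<and> gdeg gam (slots (take k ys) a) = 1} else 0)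
        = card {a. mb p (Suc k) < a \<and> odd (card {i\<in>{1..k}. mb p i = a})}"
      unfolding se using yk gdX[OF k1] by simp
  qed
  have "even (cnt gam ys + invc n (mb p))"
    unfolding cnt_eq invc_sum sum.distrib[symmetric]
    by (rule dvd_sum) (rule sum_odd_term, simp)
  moreover have "even (c0 p + invc n (mb p))" by (rule c0_invc[OF p evB])
  ultimately have "even (cnt gam ys + c0 p)" by presburger
  then show ?thesis by (rule pow_parity)
qed

lemma part1: "phi_part gam phi n p X = (-1) ^ c0 p * (\<Prod>B\<in>p. phi (pl X B))"
proof (cases "\<forall>B\<in>p. phi (pl X B) \<noteq> 0")
  case True
  then show ?thesis unfolding phi_part_eq using good_case by simp
next
  case False
  then have "(\<Prod>B\<in>p. phi (pl X B)) = 0" using sp_fin_p[OF p] by (auto intro: prod_zero)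
  then show ?thesis unfolding phi_part_eq by simp
qed

end

lemma pl_rk:
  assumes fB: "finite B" and C: "C \<subseteq> B"
  shows "pl (\<lambda>t. X (en B t)) (rk B ` C) = pl X C"
proof -
  have fC: "finite C" using finite_subset[OF C fB] .
  have e1: "sorted_list_of_set (rk B ` C) = map (rk B) (sorted_list_of_set C)"
    by (rule sorted_list_image[OF fC]) (use rk_mono[OF fB] C in blast)
  have e2: "map (\<lambda>t. X (en B t)) (map (rk B) (sorted_list_of_set C)) = map X (sorted_list_of_set C)"
    using en_rk[OF fB] C fC by auto
  show ?thesis unfolding pl_def e1 e2 ..
qed

context
  fixes sm :: "complex \<Rightarrow> 'a::ring_1 \<Rightarrow> 'a" and gam :: "'a \<Rightarrow> 'a" and phi :: "'a \<Rightarrow> complex"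
    and n :: nat and X :: "nat \<Rightarrow> 'a" and p :: "nat set set"
  assumes G: "graded_ncps sm gam phi"
    and odd: "\<forall>i\<in>{1..n}. gam (X i) = - X i"
    and p: "p \<in> set_partitions n"
begin

lemma ppF: "partition_on {1..n} p" by (rule sp_part[OF p])

lemma oddB: "B \<in> p \<Longrightarrow> \<forall>i\<in>{1..card B}. gam (X (en B i)) = - X (en B i)"
  using odd en_range[OF sp_block_fin[OF p]] part_sub[OF ppF] by blast

lemma group_blocks:
  assumes s: "s \<in> set_partitions n" "refines s p"
  shows "(\<Prod>C\<in>s. f C) = (\<Prod>B\<in>p. \<Prod>C\<in>{C\<in>s. C \<subseteq> B}. f C)"
proof -
  define g where "g = (\<lambda>C. block_of p (Min C))"
  have gC: "g C = B \<longleftrightarrow> C \<subseteq> B" if C: "C \<in> s" and B: "B \<in> p" for C B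
  proof -
    obtain B' where B': "B' \<in> p" "C \<subseteq> B'" using sub_block[OF p s C] by blast
    have "Min C \<in> C" using Min_in sp_block_fin[OF s(1) C] part_ne[OF sp_part[OF s(1)] C] by blast
    then have gB': "g C = B'" unfolding g_def using block_of_eq[OF ppF B'(1)] B'(2) by blast
    show ?thesis
    proof
      assume "g C = B" then show "C \<subseteq> B" using gB' B' by simp
    next
      assume "C \<subseteq> B" then have "B' = B" using sub_block_uniq[OF p s(1) C B'(1,2) B] by simp
      then show "g C = B" using gB' by simp
    qed
  qed
  have gs: "g ` s \<subseteq> p"
  proof
    fix B assume "B \<in> g ` s"
    then obtain C where C: "C \<in> s" "B = g C" by blast
    obtain B' where B': "B' \<in> p" "C \<subseteq> B'" using sub_block[OF p s C(1)] by blast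
    then show "B \<in> p" using gC[OF C(1) B'(1)] C by simp
  qed
  have "(\<Prod>C\<in>s. f C) = (\<Prod>B\<in>p. \<Prod>C\<in>{C\<in>s. g C = B}. f C)"
    by (rule prod.group[OF sp_fin_p[OF s(1)] sp_fin_p[OF p] gs, symmetric])
  also have "\<dots> = (\<Prod>B\<in>p. \<Prod>C\<in>{C\<in>s. C \<subseteq> B}. f C)"
  proof (rule prod.cong[OF refl])
    fix B assume B: "B \<in> p"
    have "{C\<in>s. g C = B} = {C\<in>s. C \<subseteq> B}" using gC[OF _ B] by blast
    then show "(\<Prod>C\<in>{C\<in>s. g C = B}. f C) = (\<Prod>C\<in>{C\<in>s. C \<subseteq> B}. f C)" by simp
  qed
  finally show ?thesis .
qed

lemma phi_part_split:
  assumes s: "s \<in> set_partitions n" "refines s p"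
  shows "phi_part gam phi n s X = (-1) ^ c0 p * (\<Prod>B\<in>p. phi_part gam phi (card B) (Tm p s B) (\<lambda>t. X (en B t)))"
proof -
  have ps1: "phi_part gam phi n s X = (-1) ^ c0 s * (\<Prod>C\<in>s. phi (pl X C))"
    by (rule part1[OF G odd s(1)])
  have psB: "phi_part gam phi (card B) (Tm p s B) (\<lambda>t. X (en B t))
      = (-1) ^ c0 (Tm p s B) * (\<Prod>C\<in>{C\<in>s. C \<subseteq> B}. phi (pl X C))" if B: "B \<in> p" for B
  proof -
    have fB: "finite B" using sp_block_fin[OF p B] .
    have "phi_part gam phi (card B) (Tm p s B) (\<lambda>t. X (en B t))
        = (-1) ^ c0 (Tm p s B) * (\<Prod>D\<in>Tm p s B. phi (pl (\<lambda>t. X (en B t)) D))"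
      by (rule part1[OF G oddB[OF B] Tm_part[OF p s B]])
    also have "(\<Prod>D\<in>Tm p s B. phi (pl (\<lambda>t. X (en B t)) D))
        = (\<Prod>C\<in>{C\<in>s. C \<subseteq> B}. phi (pl (\<lambda>t. X (en B t)) (rk B ` C)))"
      unfolding Tm_B[OF p s B]
    proof (rule prod.reindex[unfolded o_def])
      show "inj_on ((`) (rk B)) {C\<in>s. C \<subseteq> B}"
      proof (rule inj_onI)
        fix C C' assume CC: "C \<in> {C\<in>s. C \<subseteq> B}" "C' \<in> {C\<in>s. C \<subseteq> B}" "rk B ` C = rk B ` C'"
        then show "C = C'" using inj_on_image_eq_iff[OF rk_inj[OF fB]] by blast
      qed
    qed
    also have "\<dots> = (\<Prod>C\<in>{C\<in>s. C \<subseteq> B}. phi (pl X C))"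
    proof (rule prod.cong[OF refl])
      fix C assume "C \<in> {C\<in>s. C \<subseteq> B}"
      then show "phi (pl (\<lambda>t. X (en B t)) (rk B ` C)) = phi (pl X C)" using pl_rk[OF fB, of C X] by simp
    qed
    finally show ?thesis .
  qed
  have grp: "(\<Prod>C\<in>s. phi (pl X C)) = (\<Prod>B\<in>p. \<Prod>C\<in>{C\<in>s. C \<subseteq> B}. phi (pl X C))"
    by (rule group_blocks[OF s])
  have rhs: "(-1) ^ c0 p * (\<Prod>B\<in>p. phi_part gam phi (card B) (Tm p s B) (\<lambda>t. X (en B t)))
      = (-1) ^ c0 p * (\<Prod>B\<in>p. (-1) ^ c0 (Tm p s B)) * (\<Prod>C\<in>s. phi (pl X C))"
    unfolding grp using psB by (simp add: prod.distrib)
  show ?thesis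
  proof (cases "(\<Prod>C\<in>s. phi (pl X C)) = 0")
    case True then show ?thesis unfolding ps1 rhs by simp
  next
    case False
    have ev: "even (card C)" if C: "C \<in> s" for C
    proof (rule ccontr)
      assume oc: "odd (card C)"
      have fC: "finite C" using sp_block_fin[OF s(1) C] .
      have oddl: "\<forall>x\<in>set (map X (sorted_list_of_set C)). gam x = - x"
        using fC part_sub[OF sp_part[OF s(1)] C] odd by auto
      have "gam (pl X C) = - pl X C" unfolding pl_def using gam_prod_list[OF G oddl] fC oc by simp
      then have "phi (pl X C) = 0" by (rule phi_odd[OF G])
      then have "(\<Prod>C\<in>s. phi (pl X C)) = 0" using C sp_fin_p[OF s(1)] by (auto intro: prod_zero)
      then show False using False by simp
    qed
    have ss: "(-1::complex) ^ c0 s = (-1) ^ c0 p * (\<Prod>B\<in>p. (-1) ^ c0 (Tm p s B))"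
      by (rule sign_split[OF p s ev])
    show ?thesis unfolding ps1 rhs ss ..
  qed
qed

lemma K_eq:
  "K_part gam phi n p X = (-1) ^ c0 p * (\<Prod>B\<in>p. K_num gam phi (card B) (\<lambda>t. X (en B t)))"
proof -
  define T0 where "T0 = {s\<in>set_partitions n. refines s p}"
  define PS where "PS = PiE p (\<lambda>B. set_partitions (card B))"
  define H where "H = (\<lambda>t. (-1) ^ c0 p * (\<Prod>B\<in>p. phi_part gam phi (card B) (t B) (\<lambda>u. X (en B u))
       * of_int (moebius (set_partitions (card B)) refines (t B) {{1..card B}})) :: complex)"
  have "K_part gam phi n p X = (\<Sum>s\<in>T0. phi_part gam phi n s X * of_int (moebius (set_partitions n) refines s p))"
    unfolding K_part_def T0_def ..
  also have "\<dots> = (\<Sum>s\<in>T0. H (Tm p s))"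
  proof (rule sum.cong[OF refl])
    fix s assume "s \<in> T0"
    then have s: "s \<in> set_partitions n" "refines s p" unfolding T0_def by auto
    show "phi_part gam phi n s X * of_int (moebius (set_partitions n) refines s p) = H (Tm p s)"
      unfolding H_def phi_part_split[OF s] moebius_split[OF p s] of_int_prod
      by (simp add: prod.distrib mult.assoc)
  qed
  also have "\<dots> = (\<Sum>t\<in>PS. H t)"
    unfolding T0_def PS_def by (rule sum.reindex_bij_betw[OF Tm_bij[OF p]])
  also have "\<dots> = (-1) ^ c0 p * (\<Sum>t\<in>PS. \<Prod>B\<in>p. phi_part gam phi (card B) (t B) (\<lambda>u. X (en B u))
       * of_int (moebius (set_partitions (card B)) refines (t B) {{1..card B}}))"
    unfolding H_def by (simp add: sum_distrib_left)
  also have "(\<Sum>t\<in>PS. \<Prod>B\<in>p. phi_part gam phi (card B) (t B) (\<lambda>u. X (en B u))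
       * of_int (moebius (set_partitions (card B)) refines (t B) {{1..card B}}))
     = (\<Prod>B\<in>p. \<Sum>u\<in>set_partitions (card B). phi_part gam phi (card B) u (\<lambda>v. X (en B v))
       * of_int (moebius (set_partitions (card B)) refines u {{1..card B}}))"
    unfolding PS_def by (rule prod_sum_PiE[symmetric]) (use sp_fin_p[OF p] sp_fin in auto)
  also have "\<dots> = (\<Prod>B\<in>p. K_num gam phi (card B) (\<lambda>t. X (en B t)))"
  proof (rule prod.cong[OF refl])
    fix B assume B: "B \<in> p"
    have "card B \<ge> 1"
      using sp_block_fin[OF p B] part_ne[OF ppF B] by (simp add: Suc_le_eq card_gt_0_iff)
    have all: "{u\<in>set_partitions (card B). refines u {{1..card B}}} = set_partitions (card B)"
    proof (intro equalityI subsetI)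
      fix u assume u: "u \<in> set_partitions (card B)"
      have "refines u {{1..card B}}" unfolding refines_def using part_sub[OF sp_part[OF u]] by blast
      then show "u \<in> {u\<in>set_partitions (card B). refines u {{1..card B}}}" using u by blast
    qed auto
    show "(\<Sum>u\<in>set_partitions (card B). phi_part gam phi (card B) u (\<lambda>v. X (en B v))
       * of_int (moebius (set_partitions (card B)) refines u {{1..card B}})) = K_num gam phi (card B) (\<lambda>t. X (en B t))"
      unfolding K_num_def K_part_def all ..
  qed
  finally show ?thesis .
qed

end

theorem proposition4p25:
  fixes sm :: "complex \<Rightarrow> 'a::ring_1 \<Rightarrow> 'a" and gam :: "'a \<Rightarrow> 'a" and phi :: "'a \<Rightarrow> complex"
    and n :: nat and X :: "nat \<Rightarrow> 'a" and p :: "nat set set"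
  assumes "graded_ncps sm gam phi"
    and "\<forall>i\<in>{1..n}. gam (X i) = - X i"
    and "p \<in> set_partitions n"
  shows "phi_part gam phi n p X =
           (-1) ^ c0 p * (\<Prod>B\<in>p. phi (prod_list (map X (sorted_list_of_set B))))
       \<and> K_part gam phi n p X =
           (-1) ^ c0 p * (\<Prod>B\<in>p. K_num gam phi (card B) (\<lambda>t. X (sorted_list_of_set B ! (t - 1))))"
  using part1[OF assms] K_eq[OF assms] unfolding pl_def en_def by simp

end
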